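(* Let $\Omega$, $\mathcal{R}$, $\overline{C}$ be as in the context, with $\Omega$ nonempty and bounded and $\Omega\cap\mathcal{R}\ne\emptyset$. Define the set-valued map $\Gamma:\mathbb{R}\rightrightarrows\mathcal{S}^q$ by $\Gamma(w):=\{Y\in\Omega : \|Y\|_*-\|Y\|_2=w\}$, and suppose $\Gamma$ is calm at $0$ for each $Y\in\Gamma(0)$. Then there exists $\bar\rho>0$ such that for every $\rho>\bar\rho$: $Y^*$ is an optimal solution of $\min\{\langle\overline{C},Y\rangle : Y\in\Omega\cap\mathcal{R}\}$ if and only if $Y^*$ is an optimal solution of $$\min\{\,f_\rho(Y):=\langle\overline{C},Y\rangle+\rho(\|Y\|_*-\|Y\|_2) : Y\in\Omega\}.$$
   Context: $\mathcal{S}^q$ is the space of real symmetric $q\times q$ matrices with trace inner product and Frobenius norm; $\mathcal{S}^q_+$ the positive semidefinite cone; $\mathcal{N}^q$ the entrywise nonnegative matrices in $\mathcal{S}^q$. Given $\overline{C}\in\mathcal{S}^q$, a linear map $\mathcal{A}:\mathcal{S}^q\to\mathbb{R}^m$ and $b\in\mathbb{R}^m$, $\Omega:=\{Y\in\mathcal{S}^q_+\cap\mathcal{N}^q : \mathcal{A}(Y)=b\}$ and $\mathcal{R}:=\{Y\in\mathcal{S}^q:\operatorname{rank}(Y)\le1\}$. $\|Y\|_*$ is the nuclear norm (sum of singular values) and $\|Y\|_2$ the spectral norm (largest singular value). A set-valued map $\Psi:\mathcal{X}\rightrightarrows\mathcal{Z}$ between Euclidean spaces is calm at $\bar x$ for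 $\bar z\in\Psi(\bar x)$ if there exist $\alpha>0$ and neighborhoods $\mathcal{U}$ of $\bar x$, $\mathcal{V}$ of $\bar z$ with $\Psi(x)\cap\mathcal{V}\subseteq\Psi(\bar x)+\alpha\|x-\bar x\|\mathbb{B}$ for all $x\in\mathcal{U}$, where $\mathbb{B}$ is the closed unit ball. *)

theory Defs
  imports "Jordan_Normal_Form.Char_Poly" "Jordan_Normal_Form.DL_Rank"
begin

definition symm_mats :: "nat \<Rightarrow> real mat set" where
  "symm_mats q = {Y. Y \<in> carrier_mat q q \<and> transpose_mat Y = Y}"

definition trace_inner :: "real mat \<Rightarrow> real mat \<Rightarrow> real" where
  "trace_inner X Y = (\<Sum>i<dim_row Y. (transpose_mat X * Y) $$ (i, i))"

definition frob_norm :: "real mat \<Rightarrow> real" where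
  "frob_norm X = sqrt (trace_inner X X)"

definition psd_cone :: "nat \<Rightarrow> real mat set" where
  "psd_cone q = {Y \<in> symm_mats q. \<forall>x \<in> carrier_vec q. 0 \<le> x \<bullet> (Y *\<^sub>v x)}"

definition nonneg_mats :: "nat \<Rightarrow> real mat set" where
  "nonneg_mats q = {Y \<in> symm_mats q. \<forall>i<q. \<forall>j<q. 0 \<le> Y $$ (i, j)}"

text \<open>Singular values (with multiplicity): square roots of the eigenvalues of Y^T Y,
  i.e. of the roots of its characteristic polynomial (which splits over the reals).\<close>
definition singular_values :: "real mat \<Rightarrow> real multiset" where
  "singular_values Y = image_mset sqrt (proots (char_poly (transpose_mat Y * Y)))"

definition nuclear_norm :: "real mat \<Rightarrow> real" where
  "nuclear_norm Y = sum_mset (singular_values Y)"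

text \<open>Largest singular value (0 for the degenerate 0 x 0 matrix).\<close>
definition spectral_norm :: "real mat \<Rightarrow> real" where
  "spectral_norm Y = Max (insert 0 (set_mset (singular_values Y)))"

definition linear_map_Sq :: "nat \<Rightarrow> nat \<Rightarrow> (real mat \<Rightarrow> real vec) \<Rightarrow> bool" where
  "linear_map_Sq q m A \<longleftrightarrow>
     (\<forall>X \<in> symm_mats q. A X \<in> carrier_vec m) \<and>
     (\<forall>X \<in> symm_mats q. \<forall>Y \<in> symm_mats q. A (X + Y) = A X + A Y) \<and>
     (\<forall>X \<in> symm_mats q. \<forall>c::real. A (c \<cdot>\<^sub>m X) = c \<cdot>\<^sub>v A X)"

definition Omega_set :: "nat \<Rightarrow> (real mat \<Rightarrow> real vec) \<Rightarrow> real vec \<Rightarrow> real mat set" where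
  "Omega_set q A b = {Y \<in> psd_cone q \<inter> nonneg_mats q. A Y = b}"

definition rank_le1_set :: "nat \<Rightarrow> real mat set" where
  "rank_le1_set q = {Y \<in> symm_mats q. vec_space.rank q Y \<le> 1}"

definition calm_at :: "(real \<Rightarrow> real mat set) \<Rightarrow> real \<Rightarrow> real mat \<Rightarrow> bool" where
  "calm_at Psi xb zb \<longleftrightarrow>
     (\<exists>\<alpha>>0. \<exists>\<epsilon>>0. \<exists>\<delta>>0. \<forall>x. \<bar>x - xb\<bar> < \<epsilon> \<longrightarrow>
        (\<forall>Y \<in> Psi x. frob_norm (Y - zb) < \<delta> \<longrightarrow>
           (\<exists>Z \<in> Psi xb. frob_norm (Y - Z) \<le> \<alpha> * \<bar>x - xb\<bar>)))"

definition is_min_on :: "(real mat \<Rightarrow> real) \<Rightarrow> real mat set \<Rightarrow> real mat \<Rightarrow> bool" where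
  "is_min_on f K Y \<longleftrightarrow> Y \<in> K \<and> (\<forall>Z \<in> K. f Y \<le> f Z)"

end

theory Submission
  imports Defs "Jordan_Normal_Form.DL_Rank_Submatrix"
begin

definition orthon :: "nat \<Rightarrow> (nat \<Rightarrow> nat \<Rightarrow> real) \<Rightarrow> bool" where
  "orthon n p \<longleftrightarrow> (\<forall>k<n. \<forall>l<n. (\<Sum>i<n. p k i * p l i) = (if k = l then 1 else 0))"

definition complt :: "nat \<Rightarrow> (nat \<Rightarrow> nat \<Rightarrow> real) \<Rightarrow> bool" where
  "complt n p \<longleftrightarrow> (\<forall>i<n. \<forall>j<n. (\<Sum>k<n. p k i * p k j) = (if i = j then 1 else 0))"

lemma sum_delta0: "k < (n::nat) \<Longrightarrow> (\<Sum>i<n. if i = k then (f i::real) else 0) = f k"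
  by (simp add: sum.delta)
lemma sum_delta_left: "k < (n::nat) \<Longrightarrow> (\<Sum>i<n. (if k = i then 1 else 0) * (f i::real)) = f k"
  by (subst sum_delta0[symmetric, of k n f], assumption, rule sum.cong, auto)
lemma sum_delta_right: "k < (n::nat) \<Longrightarrow> (\<Sum>i<n. (f i::real) * (if i = k then 1 else 0)) = f k"
  by (subst sum_delta0[symmetric, of k n f], assumption, rule sum.cong, auto)

lemma sum_delta_left2: "k < (n::nat) \<Longrightarrow> (\<Sum>i<n. (if i = k then 1 else 0) * (f i::real)) = f k"
  by (subst sum_delta0[symmetric, of k n f], assumption, rule sum.cong, auto)

lemma householder:
  assumes u: "(\<Sum>i<n. u i * u i) = (1::real)" and n: "0 < n"
  shows "\<exists>h. orthon n h \<and> complt n h \<and> (\<forall>i<n. h 0 i = u i)"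
proof -
  define w where "w i = u i - (if i = 0 then 1 else 0)" for i
  define s where "s = (\<Sum>i<n. w i * w i)"
  define c where "c = (if s = 0 then 0 else 2 / s)"
  define h where "h k i = (if k = i then 1 else 0) - c * w k * w i" for k i
  have cs: "c * c * s = 2 * c" unfolding c_def by (auto simp: field_simps)
  have hsym: "h k i = h i k" for k i unfolding h_def by auto
  have orth: "orthon n h"
    unfolding orthon_def
  proof (intro allI impI)
    fix k l assume k: "k < n" and l: "l < n"
    have eq: "h k i * h l i = (if k = i then 1 else 0) * (if l = i then 1 else 0)
         - c * w l * ((if k = i then 1 else 0) * w i) - c * w k * (w i * (if i = l then 1 else 0))
         + c * c * w k * w l * (w i * w i)" for i
      unfolding h_def by (auto simp: algebra_simps)
    have "(\<Sum>i<n. h k i * h l i) = (\<Sum>i<n. (if k = i then 1 else 0) * (if l = i then 1 else 0))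
         - c * w l * (\<Sum>i<n. (if k = i then 1 else 0) * w i) - c * w k * (\<Sum>i<n. w i * (if i = l then 1 else 0))
         + c * c * w k * w l * s"
      unfolding eq s_def by (simp add: sum.distrib sum_subtractf sum_distrib_left)
    also have "\<dots> = (if k = l then 1 else 0) - c * w l * w k - c * w k * w l + (c * c * s) * w k * w l"
      using k l by (simp add: sum_delta_left sum_delta_right)
    also have "\<dots> = (if k = l then 1 else 0)" unfolding cs by (simp add: algebra_simps)
    finally show "(\<Sum>i<n. h k i * h l i) = (if k = l then 1 else 0)" .
  qed
  have compl: "complt n h"
    using orth unfolding orthon_def complt_def by (simp add: hsym)
  have s_eq: "s = 2 - 2 * u 0"
  proof -
    have "w i * w i = u i * u i - 2 * ((if i = 0 then 1 else 0) * u i) + (if i = 0 then 1 else 0)" for i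
      unfolding w_def by (cases "i = 0") (auto simp: algebra_simps mult_2)
    hence "s = (\<Sum>i<n. u i * u i) - 2 * (\<Sum>i<n. (if 0 = i then 1 else 0) * u i) + (\<Sum>i<n. (if i = 0 then 1 else 0))"
      unfolding s_def by (simp add: sum.distrib sum_subtractf sum_distrib_left)
    also have "\<dots> = 2 - 2 * u 0" using n u by (simp add: sum_delta_left2)
    finally show ?thesis .
  qed
  have h0: "h 0 i = u i" if i: "i < n" for i
  proof (cases "s = 0")
    case True
    have "\<forall>j\<in>{..<n}. w j * w j = 0"
      using True unfolding s_def by (subst sum_nonneg_eq_0_iff[symmetric]) auto
    hence "w i = 0" using i by auto
    thus ?thesis using True unfolding h_def c_def w_def by auto
  next
    case False
    have cw: "c * w 0 = -1" using False s_eq unfolding c_def w_def by (auto simp: field_simps)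
    have "h 0 i = (if 0 = i then 1 else 0) - (c * w 0) * w i" unfolding h_def by simp
    also have "\<dots> = (if 0 = i then 1 else 0) + w i" unfolding cw by simp
    finally show ?thesis unfolding w_def by auto
  qed
  show ?thesis using orth compl h0 by blast
qed

lemma sym_eigvec_complex:
  fixes n :: nat and a :: "nat \<Rightarrow> nat \<Rightarrow> real"
  assumes sym: "\<forall>i<n. \<forall>j<n. a i j = a j i" and n: "0 < n"
  shows "\<exists>c v. (\<exists>i<n. v i \<noteq> 0) \<and> (\<forall>i<n. (\<Sum>j<n. complex_of_real (a i j) * v j) = c * v i)"
proof -
  define Ac where "Ac = mat n n (\<lambda>(i,j). complex_of_real (a i j))"
  have Ac: "Ac \<in> carrier_mat n n" unfolding Ac_def by simp
  obtain as where cp: "char_poly Ac = (\<Prod>a\<leftarrow>as. [:- a, 1:])" and len: "length as = n"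
    using char_poly_factorized[OF Ac] by blast
  from len n obtain c rest where as: "as = c # rest" by (cases as) auto
  have "poly (char_poly Ac) c = 0" unfolding cp as by simp
  hence "eigenvalue Ac c" using eigenvalue_root_char_poly[OF Ac] by simp
  then obtain v where ev: "eigenvector Ac v c" unfolding eigenvalue_def by blast
  hence v: "v \<in> carrier_vec n" and v0: "v \<noteq> 0\<^sub>v n" and eq: "Ac *\<^sub>v v = c \<cdot>\<^sub>v v"
    unfolding eigenvector_def using Ac by auto
  have "\<exists>i<n. v $ i \<noteq> 0"
  proof (rule ccontr)
    assume "\<not> ?thesis"
    hence "v = 0\<^sub>v n" using v by (intro eq_vecI) auto
    with v0 show False by simp
  qed
  moreover have "(\<Sum>j<n. complex_of_real (a i j) * v $ j) = c * v $ i" if i: "i < n" for i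
  proof -
    have "(Ac *\<^sub>v v) $ i = (c \<cdot>\<^sub>v v) $ i" using eq by simp
    thus ?thesis using i v unfolding Ac_def
      by (auto simp: scalar_prod_def row_def lessThan_atLeast0)
  qed
  ultimately show ?thesis by blast
qed

lemma normalize_eig:
  fixes n :: nat and a :: "nat \<Rightarrow> nat \<Rightarrow> real"
  assumes nz: "\<exists>i<n. r i \<noteq> 0" and eq: "\<forall>i<n. (\<Sum>j<n. a i j * r j) = e * r i"
  shows "\<exists>e u. (\<Sum>i<n. u i * u i) = (1::real) \<and> (\<forall>i<n. (\<Sum>j<n. a i j * u j) = e * u i)"
proof -
  define N where "N = (\<Sum>i<n. r i * r i)"
  obtain i0 where i0: "i0 < n" "r i0 \<noteq> 0" using nz by blast
  have "r i0 * r i0 \<le> N" unfolding N_def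
    by (rule member_le_sum) (use i0 in auto)
  moreover have "r i0 * r i0 > 0" using i0(2) not_real_square_gt_zero by blast
  ultimately have Npos: "N > 0" by linarith
  define u where "u i = r i / sqrt N" for i
  have "(\<Sum>i<n. u i * u i) = (\<Sum>i<n. r i * r i) / N"
    unfolding u_def using Npos by (simp add: sum_divide_distrib[symmetric] real_sqrt_mult[symmetric])
  also have "\<dots> = 1" using Npos unfolding N_def by simp
  finally have 1: "(\<Sum>i<n. u i * u i) = 1" .
  have 2: "\<forall>i<n. (\<Sum>j<n. a i j * u j) = e * u i"
  proof (intro allI impI)
    fix i assume i: "i < n"
    have "(\<Sum>j<n. a i j * u j) = (\<Sum>j<n. a i j * r j) / sqrt N"
      unfolding u_def by (simp add: sum_divide_distrib)
    also have "\<dots> = e * u i" using eq i unfolding u_def by simp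
    finally show "(\<Sum>j<n. a i j * u j) = e * u i" .
  qed
  show ?thesis using 1 2 by blast
qed

lemma sym_eigvec:
  fixes n :: nat and a :: "nat \<Rightarrow> nat \<Rightarrow> real"
  assumes sym: "\<forall>i<n. \<forall>j<n. a i j = a j i" and n: "0 < n"
  shows "\<exists>e u. (\<Sum>i<n. u i * u i) = (1::real) \<and> (\<forall>i<n. (\<Sum>j<n. a i j * u j) = e * u i)"
proof -
  obtain c v where nz: "\<exists>i<n. v i \<noteq> 0"
    and eq: "\<forall>i<n. (\<Sum>j<n. complex_of_real (a i j) * v j) = c * v i"
    using sym_eigvec_complex[OF sym n] by blast
  define s where "s = (\<Sum>i<n. cnj (v i) * (\<Sum>j<n. complex_of_real (a i j) * v j))"
  define R where "R = (\<Sum>i<n. (cmod (v i))^2)"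
  have s1: "s = c * complex_of_real R"
  proof -
    have "s = (\<Sum>i<n. c * (v i * cnj (v i)))" unfolding s_def
      by (rule sum.cong) (use eq in \<open>auto simp: algebra_simps\<close>)
    also have "\<dots> = c * complex_of_real R" unfolding R_def of_real_sum sum_distrib_left
      by (intro sum.cong refl) (simp only: complex_norm_square)
    finally show ?thesis .
  qed
  have s2: "cnj s = s"
  proof -
    have "cnj s = (\<Sum>i<n. v i * (\<Sum>j<n. complex_of_real (a i j) * cnj (v j)))"
      unfolding s_def by (simp add: cnj_sum)
    also have "\<dots> = (\<Sum>i<n. \<Sum>j<n. v i * complex_of_real (a i j) * cnj (v j))"
      by (simp add: sum_distrib_left mult.assoc)
    also have "\<dots> = (\<Sum>j<n. \<Sum>i<n. v i * complex_of_real (a i j) * cnj (v j))"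
      by (rule sum.swap)
    also have "\<dots> = (\<Sum>j<n. \<Sum>i<n. cnj (v j) * (complex_of_real (a j i) * v i))"
      by (intro sum.cong refl) (use sym in \<open>auto simp: algebra_simps\<close>)
    also have "\<dots> = s" unfolding s_def by (simp add: sum_distrib_left)
    finally show ?thesis .
  qed
  have "Im (cnj s) = Im s" using s2 by simp
  hence "Im s = 0" by simp
  hence imc: "Im c * R = 0" using s1 by simp
  obtain i0 where i0: "i0 < n" "v i0 \<noteq> 0" using nz by blast
  have "(cmod (v i0))^2 \<le> R" unfolding R_def by (rule member_le_sum) (use i0 in auto)
  moreover have "(cmod (v i0))^2 > 0" using i0 by simp
  ultimately have "R > 0" by linarith
  with imc have imc0: "Im c = 0" by simp
  have re_eq: "\<forall>i<n. (\<Sum>j<n. a i j * Re (v j)) = Re c * Re (v i)"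
  proof (intro allI impI)
    fix i assume "i < n"
    hence "Re (\<Sum>j<n. complex_of_real (a i j) * v j) = Re (c * v i)" using eq by simp
    thus "(\<Sum>j<n. a i j * Re (v j)) = Re c * Re (v i)" using imc0 by (simp add: Re_sum)
  qed
  have im_eq: "\<forall>i<n. (\<Sum>j<n. a i j * Im (v j)) = Re c * Im (v i)"
  proof (intro allI impI)
    fix i assume "i < n"
    hence "Im (\<Sum>j<n. complex_of_real (a i j) * v j) = Im (c * v i)" using eq by simp
    thus "(\<Sum>j<n. a i j * Im (v j)) = Re c * Im (v i)" using imc0 by (simp add: Im_sum)
  qed
  show ?thesis
  proof (cases "Re (v i0) = 0")
    case True
    hence "Im (v i0) \<noteq> 0" using i0 complex_eq_iff by force
    thus ?thesis using normalize_eig[of n "\<lambda>j. Im (v j)" a "Re c"] im_eq i0 by blast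
  next
    case False
    thus ?thesis using normalize_eig[of n "\<lambda>j. Re (v j)" a "Re c"] re_eq i0 by blast
  qed
qed

lemma swap3: "(\<Sum>k<(m::nat). \<Sum>l<(m'::nat). \<Sum>r<(N::nat). F k l r) = (\<Sum>r<N. \<Sum>k<m. \<Sum>l<m'. (F k l r::real))"
proof -
  have "(\<Sum>k<m. \<Sum>l<m'. \<Sum>r<N. F k l r) = (\<Sum>k<m. \<Sum>r<N. \<Sum>l<m'. F k l r)"
    by (rule sum.cong[OF refl], rule sum.swap)
  also have "\<dots> = (\<Sum>r<N. \<Sum>k<m. \<Sum>l<m'. F k l r)" by (rule sum.swap)
  finally show ?thesis .
qed

lemma bilin_expand:
  "(\<Sum>k<(m::nat). \<Sum>l<(m'::nat). x k * (\<Sum>r<(N::nat). c r k * c' r l) * y l) =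
   (\<Sum>r<N. (\<Sum>k<m. c r k * x k) * (\<Sum>l<m'. c' r l * (y l::real)))"
proof -
  have "(\<Sum>k<m. \<Sum>l<m'. x k * (\<Sum>r<N. c r k * c' r l) * y l) =
        (\<Sum>k<m. \<Sum>l<m'. \<Sum>r<N. (c r k * x k) * (c' r l * y l))"
    by (intro sum.cong refl) (simp add: sum_distrib_left sum_distrib_right algebra_simps)
  also have "\<dots> = (\<Sum>r<N. \<Sum>k<m. \<Sum>l<m'. (c r k * x k) * (c' r l * y l))" by (rule swap3)
  also have "\<dots> = (\<Sum>r<N. (\<Sum>k<m. c r k * x k) * (\<Sum>l<m'. c' r l * y l))"
    by (simp add: sum_product)
  finally show ?thesis .
qed

lemma delta_dbl:
  assumes "i < (n::nat)" "j < n"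
  shows "(\<Sum>r<n. \<Sum>s<n. (if i = r then 1 else 0) * a r s * (if j = s then 1 else 0)) = (a i j::real)"
proof -
  have "(\<Sum>r<n. \<Sum>s<n. (if i = r then 1 else 0) * a r s * (if j = s then 1 else 0)) =
        (\<Sum>r<n. (if i = r then 1 else 0) * (\<Sum>s<n. a r s * (if s = j then 1 else 0)))"
    by (simp add: sum_distrib_left mult.assoc eq_commute[of j])
  also have "\<dots> = (\<Sum>r<n. (if i = r then 1 else 0) * a r j)"
    using assms by (simp add: sum_delta_right)
  also have "\<dots> = a i j" using assms by (simp add: sum_delta_left)
  finally show ?thesis .
qed

lemma basis_expand:
  fixes a h :: "nat \<Rightarrow> nat \<Rightarrow> real"
  assumes c: "complt n h" and i: "i < n" and j: "j < n"
  shows "a i j = (\<Sum>k<n. \<Sum>l<n. h k i * (\<Sum>r<n. \<Sum>s<n. h k r * a r s * h l s) * h l j)"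
proof -
  have "(\<Sum>k<n. \<Sum>l<n. h k i * (\<Sum>r<n. \<Sum>s<n. h k r * a r s * h l s) * h l j) =
        (\<Sum>k<n. \<Sum>l<n. \<Sum>r<n. \<Sum>s<n. (h k i * h k r) * a r s * (h l j * h l s))"
    by (intro sum.cong refl) (simp add: sum_distrib_left sum_distrib_right algebra_simps)
  also have "\<dots> = (\<Sum>r<n. \<Sum>k<n. \<Sum>l<n. \<Sum>s<n. (h k i * h k r) * a r s * (h l j * h l s))"
    by (rule swap3)
  also have "\<dots> = (\<Sum>r<n. \<Sum>s<n. \<Sum>k<n. \<Sum>l<n. (h k i * h k r) * a r s * (h l j * h l s))"
    by (rule sum.cong[OF refl], rule swap3)
  also have "\<dots> = (\<Sum>r<n. \<Sum>s<n. (\<Sum>k<n. h k i * h k r) * a r s * (\<Sum>l<n. h l j * h l s))"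
    by (simp add: sum_distrib_left sum_distrib_right algebra_simps sum_product)
  also have "\<dots> = (\<Sum>r<n. \<Sum>s<n. (if i = r then 1 else 0) * a r s * (if j = s then 1 else 0))"
    using c i j unfolding complt_def by (intro sum.cong refl) auto
  also have "\<dots> = a i j" using delta_dbl[OF i j] .
  finally show ?thesis by simp
qed

lemma gram:
  "(\<Sum>i<(n::nat). (\<Sum>a<(m::nat). x a * g a i) * (\<Sum>b<(m'::nat). y b * g' b i)) =
   (\<Sum>a<m. \<Sum>b<m'. x a * y b * (\<Sum>i<n. g a i * (g' b i::real)))"
proof -
  have "(\<Sum>i<n. (\<Sum>a<m. x a * g a i) * (\<Sum>b<m'. y b * g' b i)) =
        (\<Sum>i<n. \<Sum>a<m. \<Sum>b<m'. x a * y b * (g a i * g' b i))"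
    by (simp add: sum_product algebra_simps)
  also have "\<dots> = (\<Sum>a<m. \<Sum>b<m'. \<Sum>i<n. x a * y b * (g a i * g' b i))"
    by (rule swap3[symmetric])
  also have "\<dots> = (\<Sum>a<m. \<Sum>b<m'. x a * y b * (\<Sum>i<n. g a i * g' b i))"
    by (simp add: sum_distrib_left)
  finally show ?thesis .
qed

lemma gram1:
  "(\<Sum>i<(n::nat). f i * (\<Sum>b<(m::nat). y b * g b i)) = (\<Sum>b<m. y b * (\<Sum>i<n. f i * (g b i::real)))"
proof -
  have "(\<Sum>i<n. f i * (\<Sum>b<m. y b * g b i)) = (\<Sum>i<n. \<Sum>b<m. y b * (f i * g b i))"
    by (simp add: sum_distrib_left algebra_simps)
  also have "\<dots> = (\<Sum>b<m. \<Sum>i<n. y b * (f i * g b i))" by (rule sum.swap)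
  finally show ?thesis by (simp add: sum_distrib_left)
qed

lemma delta_sum2: "(\<Sum>a<(m::nat). \<Sum>b<m. x a * y b * (if a = b then 1 else 0)) = (\<Sum>a<m. x a * (y a::real))"
proof (rule sum.cong[OF refl])
  fix a assume "a \<in> {..<m}"
  hence "(\<Sum>b<m. x a * y b * (if a = b then 1 else 0)) = (\<Sum>b<m. (x a * y b) * (if b = a then 1 else 0))"
    by (intro sum.cong refl) auto
  also have "\<dots> = x a * y a" using \<open>a \<in> {..<m}\<close> by (simp add: sum_delta_right)
  finally show "(\<Sum>b<m. x a * y b * (if a = b then 1 else 0)) = x a * y a" .
qed

theorem spectral_fun:
  fixes n :: nat and a :: "nat \<Rightarrow> nat \<Rightarrow> real"
  assumes "\<forall>i<n. \<forall>j<n. a i j = a j i"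
  shows "\<exists>p d. orthon n p \<and> complt n p \<and> (\<forall>i<n. \<forall>j<n. a i j = (\<Sum>k<n. d k * p k i * p k j))"
  using assms
proof (induction n arbitrary: a)
  case 0
  show ?case unfolding orthon_def complt_def by auto
next
  case (Suc m)
  define n where "n = Suc m"
  have sym: "\<forall>i<n. \<forall>j<n. a i j = a j i" using Suc.prems n_def by simp
  obtain e u where u1: "(\<Sum>i<n. u i * u i) = 1" and eu: "\<forall>i<n. (\<Sum>j<n. a i j * u j) = e * u i"
    using sym_eigvec[OF sym] n_def by auto
  obtain h where oh: "orthon n h" and ch: "complt n h" and h0: "\<forall>i<n. h 0 i = u i"
    using householder[OF u1] n_def by auto
  define b where "b k l = (\<Sum>r<n. \<Sum>s<n. h k r * a r s * h l s)" for k l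
  have expand: "a i j = (\<Sum>k<n. \<Sum>l<n. h k i * b k l * h l j)" if "i < n" "j < n" for i j
    unfolding b_def using basis_expand[OF ch that] .
  have bsym: "b k l = b l k" for k l
  proof -
    have "b k l = (\<Sum>s<n. \<Sum>r<n. h k r * a r s * h l s)" unfolding b_def by (rule sum.swap)
    also have "\<dots> = b l k" unfolding b_def
      by (intro sum.cong refl) (use sym in \<open>auto simp: algebra_simps\<close>)
    finally show ?thesis .
  qed
  have b0: "b 0 l = e * (if 0 = l then 1 else 0)" if l: "l < n" for l
  proof -
    have "b 0 l = (\<Sum>s<n. (\<Sum>r<n. a s r * u r) * h l s)" unfolding b_def
    proof (subst sum.swap, rule sum.cong[OF refl])
      fix s assume s: "s \<in> {..<n}"
      show "(\<Sum>r<n. h 0 r * a r s * h l s) = (\<Sum>r<n. a s r * u r) * h l s"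
        unfolding sum_distrib_right by (rule sum.cong[OF refl]) (use sym h0 s in auto)
    qed
    also have "\<dots> = e * (\<Sum>s<n. h 0 s * h l s)"
      using eu h0 by (auto intro!: sum.cong simp: sum_distrib_left algebra_simps)
    also have "\<dots> = e * (if 0 = l then 1 else 0)" using oh l n_def unfolding orthon_def by simp
    finally show ?thesis .
  qed
  define a3 where "a3 k l = b (Suc k) (Suc l)" for k l
  have "\<forall>i<m. \<forall>j<m. a3 i j = a3 j i" unfolding a3_def using bsym by simp
  from Suc.IH[OF this] obtain p' d' where op': "orthon m p'" and cp': "complt m p'"
    and rep': "\<forall>i<m. \<forall>j<m. a3 i j = (\<Sum>k<m. d' k * p' k i * p' k j)" by blast
  define p where "p k i = (case k of 0 \<Rightarrow> h 0 i | Suc r \<Rightarrow> (\<Sum>l<m. p' r l * h (Suc l) i))" for k i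
  define d where "d k = (case k of 0 \<Rightarrow> e | Suc r \<Rightarrow> d' r)" for k
  have p0: "p 0 i = h 0 i" and pS: "p (Suc r) i = (\<Sum>l<m. p' r l * h (Suc l) i)" for r i
    unfolding p_def by simp_all
  have hS: "(\<Sum>i<n. h (Suc k) i * h (Suc l) i) = (if k = l then 1 else 0)" if "k < m" "l < m" for k l
    using oh that n_def unfolding orthon_def by auto
  have h0S: "(\<Sum>i<n. h 0 i * h (Suc l) i) = 0" if "l < m" for l
    using oh that n_def unfolding orthon_def by auto
  have orth: "orthon n p"
    unfolding orthon_def
  proof (intro allI impI)
    fix k l assume k: "k < n" and l: "l < n"
    show "(\<Sum>i<n. p k i * p l i) = (if k = l then 1 else 0)"
    proof (cases k)
      case 0
      show ?thesis
      proof (cases l)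
        case 0
        have "(\<Sum>i<n. p k i * p l i) = (\<Sum>i<n. h 0 i * h 0 i)" unfolding \<open>k = 0\<close> 0 p0 ..
        also have "\<dots> = 1" using oh n_def unfolding orthon_def by auto
        finally show ?thesis using \<open>k = 0\<close> 0 by simp
      next
        case (Suc r')
        have "(\<Sum>i<n. p k i * p l i) = (\<Sum>b<m. p' r' b * (\<Sum>i<n. h 0 i * h (Suc b) i))"
          unfolding \<open>k = 0\<close> Suc p0 pS by (rule gram1)
        also have "\<dots> = 0" using h0S by simp
        finally show ?thesis using \<open>k = 0\<close> Suc by simp
      qed
    next
      case (Suc r)
      show ?thesis
      proof (cases l)
        case 0
        have "(\<Sum>i<n. p k i * p l i) = (\<Sum>i<n. p l i * p k i)" by (simp add: mult.commute)
        also have "\<dots> = (\<Sum>b<m. p' r b * (\<Sum>i<n. h 0 i * h (Suc b) i))"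
          unfolding 0 Suc p0 pS by (rule gram1)
        also have "\<dots> = 0" using h0S by simp
        finally show ?thesis using 0 Suc by simp
      next
        case (Suc r')
        have rm: "r < m" "r' < m" using k l \<open>k = Suc r\<close> Suc n_def by auto
        have "(\<Sum>i<n. p k i * p l i) = (\<Sum>a<m. \<Sum>b<m. p' r a * p' r' b * (\<Sum>i<n. h (Suc a) i * h (Suc b) i))"
          unfolding \<open>k = Suc r\<close> Suc pS by (rule gram)
        also have "\<dots> = (\<Sum>a<m. \<Sum>b<m. p' r a * p' r' b * (if a = b then 1 else 0))"
          using hS by (intro sum.cong refl) auto
        also have "\<dots> = (\<Sum>a<m. p' r a * p' r' a)" by (rule delta_sum2)
        also have "\<dots> = (if r = r' then 1 else 0)" using op' rm unfolding orthon_def by simp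
        finally show ?thesis using \<open>k = Suc r\<close> Suc by simp
      qed
    qed
  qed
  have comp: "complt n p"
    unfolding complt_def
  proof (intro allI impI)
    fix i j assume i: "i < n" and j: "j < n"
    have "(\<Sum>k<n. p k i * p k j) = h 0 i * h 0 j + (\<Sum>r<m. p (Suc r) i * p (Suc r) j)"
      unfolding n_def sum.lessThan_Suc_shift p0 by simp
    also have "(\<Sum>r<m. p (Suc r) i * p (Suc r) j) =
        (\<Sum>a<m. \<Sum>b<m. h (Suc a) i * (\<Sum>r<m. p' r a * p' r b) * h (Suc b) j)"
      unfolding pS bilin_expand ..
    also have "\<dots> = (\<Sum>a<m. \<Sum>b<m. h (Suc a) i * h (Suc b) j * (if a = b then 1 else 0))"
      using cp' unfolding complt_def by (intro sum.cong refl) auto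
    also have "\<dots> = (\<Sum>a<m. h (Suc a) i * h (Suc a) j)" by (rule delta_sum2)
    also have "h 0 i * h 0 j + \<dots> = (\<Sum>k<n. h k i * h k j)"
      unfolding n_def sum.lessThan_Suc_shift by simp
    also have "\<dots> = (if i = j then 1 else 0)" using ch i j unfolding complt_def by simp
    finally show "(\<Sum>k<n. p k i * p k j) = (if i = j then 1 else 0)" .
  qed
  have b0': "b k 0 = e * (if k = 0 then 1 else 0)" if "k < n" for k
    using b0[OF that] bsym[of k 0] by simp
  have rep: "\<forall>i<n. \<forall>j<n. a i j = (\<Sum>k<n. d k * p k i * p k j)"
  proof (intro allI impI)
    fix i j assume i: "i < n" and j: "j < n"
    have "a i j = (\<Sum>l<n. h 0 i * b 0 l * h l j) + (\<Sum>k<m. \<Sum>l<n. h (Suc k) i * b (Suc k) l * h l j)"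
      using expand[OF i j] unfolding n_def sum.lessThan_Suc_shift by simp
    also have "(\<Sum>l<n. h 0 i * b 0 l * h l j) = (\<Sum>l<n. (if l = 0 then 1 else 0) * (e * h 0 i * h l j))"
      using b0 by (intro sum.cong refl) auto
    also have "\<dots> = e * h 0 i * h 0 j" using n_def by (simp add: sum_delta_left2)
    also have "(\<Sum>k<m. \<Sum>l<n. h (Suc k) i * b (Suc k) l * h l j) =
               (\<Sum>k<m. \<Sum>l<m. h (Suc k) i * a3 k l * h (Suc l) j)"
    proof (rule sum.cong[OF refl])
      fix k assume "k \<in> {..<m}"
      hence "b (Suc k) 0 = 0" using b0'[of "Suc k"] n_def by simp
      thus "(\<Sum>l<n. h (Suc k) i * b (Suc k) l * h l j) = (\<Sum>l<m. h (Suc k) i * a3 k l * h (Suc l) j)"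
        unfolding n_def sum.lessThan_Suc_shift a3_def by simp
    qed
    also have "\<dots> = (\<Sum>k<m. \<Sum>l<m. h (Suc k) i * (\<Sum>r<m. (d' r * p' r k) * p' r l) * h (Suc l) j)"
      using rep' by (intro sum.cong refl) (auto simp: mult.assoc)
    also have "\<dots> = (\<Sum>r<m. (\<Sum>k<m. d' r * p' r k * h (Suc k) i) * (\<Sum>l<m. p' r l * h (Suc l) j))"
      by (rule bilin_expand)
    also have "\<dots> = (\<Sum>r<m. d (Suc r) * p (Suc r) i * p (Suc r) j)"
      unfolding pS d_def by (simp add: sum_distrib_left mult.assoc)
    also have "e * h 0 i * h 0 j + \<dots> = (\<Sum>k<n. d k * p k i * p k j)"
      unfolding n_def sum.lessThan_Suc_shift p0 d_def by simp
    finally show "a i j = (\<Sum>k<n. d k * p k i * p k j)" .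
  qed
  show ?case using orth comp rep n_def by blast
qed

locale spec_fun =
  fixes n :: nat and p :: "nat \<Rightarrow> nat \<Rightarrow> real" and d :: "nat \<Rightarrow> real" and a :: "nat \<Rightarrow> nat \<Rightarrow> real"
  assumes orth: "orthon n p" and comp: "complt n p"
    and rep: "\<forall>i<n. \<forall>j<n. a i j = (\<Sum>k<n. d k * p k i * p k j)"
begin

lemma orth': "k < n \<Longrightarrow> l < n \<Longrightarrow> (\<Sum>i<n. p k i * p l i) = (if k = l then 1 else 0)"
  using orth unfolding orthon_def by auto

lemma comp': "i < n \<Longrightarrow> j < n \<Longrightarrow> (\<Sum>k<n. p k i * p k j) = (if i = j then 1 else 0)"
  using comp unfolding complt_def by auto

lemma quad: "(\<Sum>i<n. \<Sum>j<n. x i * a i j * x j) = (\<Sum>k<n. d k * (\<Sum>i<n. p k i * x i)^2)"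
proof -
  have "(\<Sum>i<n. \<Sum>j<n. x i * a i j * x j) = (\<Sum>i<n. \<Sum>j<n. x i * (\<Sum>k<n. (d k * p k i) * p k j) * x j)"
    using rep by (intro sum.cong refl) (auto simp: mult.assoc)
  also have "\<dots> = (\<Sum>k<n. (\<Sum>i<n. (d k * p k i) * x i) * (\<Sum>j<n. p k j * x j))"
    by (rule bilin_expand)
  also have "\<dots> = (\<Sum>k<n. d k * (\<Sum>i<n. p k i * x i)^2)"
  proof (rule sum.cong[OF refl])
    fix k
    have "(\<Sum>i<n. (d k * p k i) * x i) = d k * (\<Sum>i<n. p k i * x i)"
      by (simp add: sum_distrib_left mult.assoc)
    thus "(\<Sum>i<n. (d k * p k i) * x i) * (\<Sum>j<n. p k j * x j) = d k * (\<Sum>i<n. p k i * x i)^2"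
      by (simp add: power2_eq_square)
  qed
  finally show ?thesis .
qed

lemma normsq: "(\<Sum>k<n. (\<Sum>i<n. p k i * x i)^2) = (\<Sum>i<n. x i * x i)"
proof -
  have "(\<Sum>k<n. (\<Sum>i<n. p k i * x i)^2) = (\<Sum>k<n. (\<Sum>i<n. p k i * x i) * (\<Sum>j<n. p k j * x j))"
    by (simp add: power2_eq_square)
  also have "\<dots> = (\<Sum>i<n. \<Sum>j<n. x i * (\<Sum>k<n. p k i * p k j) * x j)"
    by (rule bilin_expand[symmetric])
  also have "\<dots> = (\<Sum>i<n. \<Sum>j<n. x i * x j * (if i = j then 1 else 0))"
    using comp' by (intro sum.cong refl) auto
  also have "\<dots> = (\<Sum>i<n. x i * x i)" by (rule delta_sum2)
  finally show ?thesis .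
qed

lemma quad_eig: "j < n \<Longrightarrow> (\<Sum>i<n. \<Sum>l<n. p j i * a i l * p j l) = d j"
proof -
  assume j: "j < n"
  have "(\<Sum>i<n. \<Sum>l<n. p j i * a i l * p j l) = (\<Sum>k<n. d k * (\<Sum>i<n. p k i * p j i)^2)" by (rule quad)
  also have "\<dots> = (\<Sum>k<n. (if k = j then 1 else 0) * d k)"
    using orth' j by (intro sum.cong refl) auto
  also have "\<dots> = d j" using j by (simp add: sum_delta_left2)
  finally show ?thesis .
qed

lemma trace_eq: "(\<Sum>i<n. a i i) = (\<Sum>k<n. d k)"
proof -
  have "(\<Sum>i<n. a i i) = (\<Sum>i<n. \<Sum>k<n. d k * (p k i * p k i))"
    using rep by (intro sum.cong refl) (auto simp: mult.assoc)
  also have "\<dots> = (\<Sum>k<n. d k * (\<Sum>i<n. p k i * p k i))"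
    by (subst sum.swap) (simp add: sum_distrib_left)
  also have "\<dots> = (\<Sum>k<n. d k)" using orth' by simp
  finally show ?thesis .
qed

lemma sq_entry: "i < n \<Longrightarrow> j < n \<Longrightarrow> (\<Sum>r<n. a r i * a r j) = (\<Sum>k<n. (d k)^2 * p k i * p k j)"
proof -
  assume i: "i < n" and j: "j < n"
  have "(\<Sum>r<n. a r i * a r j) = (\<Sum>r<n. (\<Sum>k<n. (d k * p k i) * p k r) * (\<Sum>l<n. (d l * p l j) * p l r))"
    using rep i j by (intro sum.cong refl) (auto simp: algebra_simps)
  also have "\<dots> = (\<Sum>k<n. \<Sum>l<n. (d k * p k i) * (d l * p l j) * (\<Sum>r<n. p k r * p l r))"
    by (rule gram)
  also have "\<dots> = (\<Sum>k<n. \<Sum>l<n. (d k * p k i) * (d l * p l j) * (if k = l then 1 else 0))"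
    using orth' by (intro sum.cong refl) auto
  also have "\<dots> = (\<Sum>k<n. (d k * p k i) * (d k * p k j))" by (rule delta_sum2)
  also have "\<dots> = (\<Sum>k<n. (d k)^2 * p k i * p k j)"
    by (simp add: power2_eq_square algebra_simps)
  finally show ?thesis .
qed

lemma frob_eq: "(\<Sum>i<n. \<Sum>r<n. a r i * a r i) = (\<Sum>k<n. (d k)^2)"
proof -
  have "(\<Sum>i<n. \<Sum>r<n. a r i * a r i) = (\<Sum>i<n. \<Sum>k<n. (d k)^2 * (p k i * p k i))"
    by (rule sum.cong[OF refl]) (use sq_entry in \<open>auto simp: mult.assoc\<close>)
  also have "\<dots> = (\<Sum>k<n. (d k)^2 * (\<Sum>i<n. p k i * p k i))"
    by (subst sum.swap) (simp add: sum_distrib_left)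
  also have "\<dots> = (\<Sum>k<n. (d k)^2)" using orth' by simp
  finally show ?thesis .
qed

end

lemma quadform:
  assumes Y: "Y \<in> carrier_mat q q" and x: "x \<in> carrier_vec q"
  shows "x \<bullet> (Y *\<^sub>v x) = (\<Sum>i<q. \<Sum>j<q. x $ i * Y $$ (i,j) * x $ j)"
  using Y x by (simp add: scalar_prod_def lessThan_atLeast0 sum_distrib_left mult.assoc row_def)

lemma entry_prod:
  assumes "A \<in> carrier_mat q q" "B \<in> carrier_mat q q" "i < q" "j < q"
  shows "(A * B) $$ (i,j) = (\<Sum>r<q. A $$ (i,r) * B $$ (r,j))"
  using assms by (simp add: scalar_prod_def lessThan_atLeast0 row_def col_def)

lemma proots_lin_prod: "proots (\<Prod>a\<leftarrow>xs. [:- a, 1:]) = mset (xs :: real list)"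
proof (induction xs)
  case (Cons a xs)
  have nz: "(\<Prod>a\<leftarrow>xs. [:- a, 1:]) \<noteq> (0::real poly)" by (auto simp: prod_list_zero_iff)
  have "proots (\<Prod>a\<leftarrow>a # xs. [:- a, 1:]) = proots [:- a, 1:] + proots (\<Prod>a\<leftarrow>xs. [:- a, 1:])"
    unfolding list.map prod_list.Cons by (rule proots_mult) (use nz in auto)
  also have "proots [:- a, 1:] = {#a#}" using proots_linear_factor[of "-a"] by simp
  finally show ?case using Cons by simp
qed simp

lemma psd_decomp:
  assumes Y: "Y \<in> psd_cone q"
  shows "\<exists>p d. spec_fun q p d (\<lambda>i j. Y $$ (i,j)) \<and> (\<forall>k<q. 0 \<le> d k)"
proof -
  have Yc: "Y \<in> carrier_mat q q" and Yt: "transpose_mat Y = Y"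
    using Y unfolding psd_cone_def symm_mats_def by auto
  have psd: "\<forall>x\<in>carrier_vec q. 0 \<le> x \<bullet> (Y *\<^sub>v x)" using Y unfolding psd_cone_def by auto
  have "\<forall>i<q. \<forall>j<q. Y $$ (i,j) = Y $$ (j,i)"
  proof (intro allI impI)
    fix i j assume "i < q" "j < q"
    hence "transpose_mat Y $$ (j,i) = Y $$ (i,j)" using Yc by simp
    thus "Y $$ (i,j) = Y $$ (j,i)" using Yt by simp
  qed
  from spectral_fun[OF this] obtain p d where sf: "spec_fun q p d (\<lambda>i j. Y $$ (i,j))"
    unfolding spec_fun_def by blast
  interpret spec_fun q p d "\<lambda>i j. Y $$ (i,j)" by (rule sf)
  have "0 \<le> d k" if k: "k < q" for k
  proof -
    define x where "x = vec q (p k)"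
    have x: "x \<in> carrier_vec q" unfolding x_def by simp
    have "x \<bullet> (Y *\<^sub>v x) = (\<Sum>i<q. \<Sum>j<q. p k i * Y $$ (i,j) * p k j)"
      unfolding quadform[OF Yc x] unfolding x_def by (intro sum.cong refl) auto
    also have "\<dots> = d k" by (rule quad_eig[OF k])
    finally show ?thesis using psd x by metis
  qed
  thus ?thesis using sf by blast
qed

lemma sv_eq:
  assumes Yc: "Y \<in> carrier_mat q q" and sf: "spec_fun q p d (\<lambda>i j. Y $$ (i,j))"
  shows "singular_values Y = mset (map (\<lambda>k. \<bar>d k\<bar>) [0..<q])"
proof -
  interpret spec_fun q p d "\<lambda>i j. Y $$ (i,j)" by (rule sf)
  define P where "P = mat q q (\<lambda>(i,k). p k i)"
  define D2 where "D2 = mat q q (\<lambda>(k,l). if k = l then (d k)^2 else 0)"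
  have P: "P \<in> carrier_mat q q" and D2: "D2 \<in> carrier_mat q q" and Pt: "transpose_mat P \<in> carrier_mat q q"
    unfolding P_def D2_def by auto
  have YtY: "transpose_mat Y * Y \<in> carrier_mat q q" using Yc by simp
  have PD: "(P * D2) $$ (i,l) = p l i * (d l)^2" if "i < q" "l < q" for i l
  proof -
    have "(P * D2) $$ (i,l) = (\<Sum>k<q. p k i * (if k = l then (d k)^2 else 0))"
      using that P D2 unfolding entry_prod[OF P D2 that] by (simp add: P_def D2_def)
    also have "\<dots> = (\<Sum>k<q. (p k i * (d k)^2) * (if k = l then 1 else 0))"
      by (intro sum.cong refl) auto
    also have "\<dots> = p l i * (d l)^2" using that by (simp only: sum_delta_right)
    finally show ?thesis .
  qed
  have eq: "transpose_mat Y * Y = P * D2 * transpose_mat P"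
  proof (rule eq_matI)
    fix i j assume i: "i < dim_row (P * D2 * transpose_mat P)" and j: "j < dim_col (P * D2 * transpose_mat P)"
    hence i: "i < q" and j: "j < q" using P by auto
    have "(transpose_mat Y * Y) $$ (i,j) = (\<Sum>r<q. Y $$ (r,i) * Y $$ (r,j))"
      using entry_prod[OF _ Yc i j, of "transpose_mat Y"] Yc i by simp
    also have "\<dots> = (\<Sum>k<q. (d k)^2 * p k i * p k j)" by (rule sq_entry[OF i j])
    also have "\<dots> = (\<Sum>l<q. (P * D2) $$ (i,l) * transpose_mat P $$ (l,j))"
      using PD i j by (intro sum.cong refl) (auto simp: P_def algebra_simps)
    also have "\<dots> = (P * D2 * transpose_mat P) $$ (i,j)"
      using entry_prod[OF _ Pt i j, of "P * D2"] P D2 by simp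
    finally show "(transpose_mat Y * Y) $$ (i,j) = (P * D2 * transpose_mat P) $$ (i,j)" .
  qed (use P Yc in auto)
  have PPt: "P * transpose_mat P = 1\<^sub>m q"
  proof (rule eq_matI)
    fix i j assume "i < dim_row (1\<^sub>m q)" "j < dim_col (1\<^sub>m q)"
    hence i: "i < q" and j: "j < q" by auto
    have "(P * transpose_mat P) $$ (i,j) = (\<Sum>r<q. P $$ (i,r) * transpose_mat P $$ (r,j))"
      by (rule entry_prod[OF P Pt i j])
    also have "\<dots> = (\<Sum>k<q. p k i * p k j)"
      by (rule sum.cong[OF refl]) (use i j in \<open>auto simp: P_def\<close>)
    also have "\<dots> = 1\<^sub>m q $$ (i,j)" using comp' i j by simp
    finally show "(P * transpose_mat P) $$ (i,j) = 1\<^sub>m q $$ (i,j)" .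
  qed (use P in auto)
  have PtP: "transpose_mat P * P = 1\<^sub>m q"
  proof (rule eq_matI)
    fix i j assume "i < dim_row (1\<^sub>m q)" "j < dim_col (1\<^sub>m q)"
    hence i: "i < q" and j: "j < q" by auto
    have "(transpose_mat P * P) $$ (i,j) = (\<Sum>r<q. transpose_mat P $$ (i,r) * P $$ (r,j))"
      by (rule entry_prod[OF Pt P i j])
    also have "\<dots> = (\<Sum>k<q. p i k * p j k)"
      by (rule sum.cong[OF refl]) (use i j in \<open>auto simp: P_def\<close>)
    also have "\<dots> = 1\<^sub>m q $$ (i,j)" using orth' i j by simp
    finally show "(transpose_mat P * P) $$ (i,j) = 1\<^sub>m q $$ (i,j)" .
  qed (use P in auto)
  have "similar_mat_wit (transpose_mat Y * Y) D2 P (transpose_mat P)"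
    unfolding similar_mat_wit_def Let_def using YtY D2 P Pt PPt PtP eq Yc by auto
  hence "char_poly (transpose_mat Y * Y) = char_poly D2"
    by (intro char_poly_similar) (auto simp: similar_mat_def)
  also have "char_poly D2 = (\<Prod>a\<leftarrow>diag_mat D2. [:- a, 1:])"
    by (rule char_poly_upper_triangular[OF D2]) (auto simp: upper_triangular_def D2_def)
  also have "diag_mat D2 = map (\<lambda>k. (d k)^2) [0..<q]"
    unfolding diag_mat_def D2_def by auto
  finally have cp: "char_poly (transpose_mat Y * Y) = (\<Prod>a\<leftarrow>map (\<lambda>k. (d k)^2) [0..<q]. [:- a, 1:])" .
  show ?thesis
    unfolding singular_values_def cp proots_lin_prod by (simp add: mset_map multiset.map_comp o_def)
qed

lemma det1: "(B::'a::comm_ring_1 mat) \<in> carrier_mat 1 1 \<Longrightarrow> det B = B $$ (0,0)"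
  by (subst det_upper_triangular[of B 1]) (auto simp: upper_triangular_def diag_mat_def)

lemma det2: assumes "(A::'a::comm_ring_1 mat) \<in> carrier_mat 2 2"
  shows "det A = A$$(0,0)*A$$(1,1) - A$$(0,1)*A$$(1,0)"
proof -
  have "det A = (\<Sum>i<2. A $$ (i,0) * cofactor A i 0)"
    by (rule laplace_expansion_column[OF assms]) simp
  also have "\<dots> = A$$(0,0)*A$$(1,1) - A$$(0,1)*A$$(1,0)"
    using assms by (simp add: cofactor_def det1 mat_delete_def numeral_2_eq_2 lessThan_Suc)
  finally show ?thesis .
qed

lemma pick_two: assumes "i < (j::nat)" shows "pick {i,j} 0 = i" "pick {i,j} (Suc 0) = j"
proof -
  show p0: "pick {i,j} 0 = i" unfolding pick.simps by (rule Least_equality) (use assms in auto)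
  show "pick {i,j} (Suc 0) = j" unfolding pick.simps p0[unfolded pick.simps]
    by (rule Least_equality) (use assms in auto)
qed

lemma rank_le1_minor:
  assumes Y: "(Y::real mat) \<in> carrier_mat q q" and r: "vec_space.rank q Y \<le> 1"
    and ij: "i < j" "j < q"
  shows "Y $$ (i,i) * Y $$ (j,j) - Y $$ (i,j) * Y $$ (j,i) = 0"
proof (rule ccontr)
  assume ne: "Y $$ (i,i) * Y $$ (j,j) - Y $$ (i,j) * Y $$ (j,i) \<noteq> 0"
  have cardI: "card {a. a < q \<and> a \<in> {i,j}} = 2"
  proof -
    have "{a. a < q \<and> a \<in> {i,j}} = {i,j}" using ij by auto
    thus ?thesis using ij by simp
  qed
  have S: "submatrix Y {i,j} {i,j} \<in> carrier_mat 2 2"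
    using Y cardI unfolding carrier_mat_def by (simp add: dim_submatrix)
  have idx: "submatrix Y {i,j} {i,j} $$ (a,b) = Y $$ (pick {i,j} a, pick {i,j} b)" if "a < 2" "b < 2" for a b
    by (rule submatrix_index) (use that Y cardI in auto)
  have "det (submatrix Y {i,j} {i,j}) = Y $$ (i,i) * Y $$ (j,j) - Y $$ (i,j) * Y $$ (j,i)"
    unfolding det2[OF S] using idx[of 0 0] idx[of 0 1] idx[of 1 0] idx[of 1 1] pick_two[OF ij(1)] by simp
  with ne have "det (submatrix Y {i,j} {i,j}) \<noteq> 0" by simp
  from vec_space.rank_gt_minor[OF Y this] have "card {a. a < q \<and> a \<in> {i,j}} \<le> vec_space.rank q Y" .
  with cardI r show False by simp
qed

lemma psd_facts:
  assumes Y: "Y \<in> psd_cone q"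
  shows "nuclear_norm Y = (\<Sum>i<q. Y $$ (i,i))"
    and "\<forall>x\<in>carrier_vec q. x \<bullet> (Y *\<^sub>v x) \<le> spectral_norm Y * (x \<bullet> x)"
    and "\<exists>x\<in>carrier_vec q. x \<bullet> x \<le> 1 \<and> x \<bullet> (Y *\<^sub>v x) = spectral_norm Y"
    and "0 \<le> nuclear_norm Y - spectral_norm Y"
    and "nuclear_norm Y - spectral_norm Y = 0 \<longleftrightarrow> vec_space.rank q Y \<le> 1"
proof -
  have Yc: "Y \<in> carrier_mat q q" and Yt: "transpose_mat Y = Y"
    using Y unfolding psd_cone_def symm_mats_def by auto
  have Ysym: "Y $$ (i,j) = Y $$ (j,i)" if "i < q" "j < q" for i j
  proof -
    have "transpose_mat Y $$ (j,i) = Y $$ (i,j)" using Yc that by simp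
    thus ?thesis using Yt by simp
  qed
  obtain p d where sf: "spec_fun q p d (\<lambda>i j. Y $$ (i,j))" and dnn: "\<forall>k<q. 0 \<le> d k"
    using psd_decomp[OF Y] by blast
  interpret spec_fun q p d "\<lambda>i j. Y $$ (i,j)" by (rule sf)
  have "singular_values Y = mset (map (\<lambda>k. \<bar>d k\<bar>) [0..<q])" by (rule sv_eq[OF Yc sf])
  also have "map (\<lambda>k. \<bar>d k\<bar>) [0..<q] = map d [0..<q]" using dnn by auto
  finally have sv: "singular_values Y = mset (map d [0..<q])" .
  define S where "S = (\<Sum>k<q. d k)"
  define lam where "lam = spectral_norm Y"
  have nuc: "nuclear_norm Y = S" unfolding nuclear_norm_def sv S_def
    by (simp add: sum_unfold_sum_mset lessThan_atLeast0)
  have lam_def': "lam = Max (insert 0 (d ` {..<q}))"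
    unfolding lam_def spectral_norm_def sv by (simp add: lessThan_atLeast0)
  have lam_ge: "d k \<le> lam" if "k < q" for k unfolding lam_def' using that by (intro Max_ge) auto
  have lam0: "0 \<le> lam" unfolding lam_def' by (intro Max_ge) auto
  have lam_in: "lam = 0 \<or> (\<exists>k<q. d k = lam)"
  proof -
    have "lam \<in> insert 0 (d ` {..<q})" unfolding lam_def' by (intro Max_in) auto
    thus ?thesis by auto
  qed
  have S0: "0 \<le> S" unfolding S_def using dnn by (intro sum_nonneg) auto
  have lamS: "lam \<le> S"
    using lam_in
  proof
    assume "lam = 0" thus ?thesis using S0 by simp
  next
    assume "\<exists>k<q. d k = lam"
    then obtain k where k: "k < q" "d k = lam" by blast
    have "d k \<le> S" unfolding S_def by (rule member_le_sum) (use k dnn in auto)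
    thus ?thesis using k by simp
  qed
  show "nuclear_norm Y = (\<Sum>i<q. Y $$ (i,i))" unfolding nuc S_def using trace_eq by simp
  show "\<forall>x\<in>carrier_vec q. x \<bullet> (Y *\<^sub>v x) \<le> spectral_norm Y * (x \<bullet> x)"
  proof
    fix x :: "real vec" assume x: "x \<in> carrier_vec q"
    have "x \<bullet> (Y *\<^sub>v x) = (\<Sum>k<q. d k * (\<Sum>i<q. p k i * x $ i)^2)"
      unfolding quadform[OF Yc x] by (rule quad)
    also have "\<dots> \<le> (\<Sum>k<q. lam * (\<Sum>i<q. p k i * x $ i)^2)"
      by (intro sum_mono mult_right_mono lam_ge) auto
    also have "\<dots> = lam * (\<Sum>i<q. x $ i * x $ i)" by (simp add: sum_distrib_left[symmetric] normsq)
    also have "(\<Sum>i<q. x $ i * x $ i) = x \<bullet> x" using x by (simp add: scalar_prod_def lessThan_atLeast0)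
    finally show "x \<bullet> (Y *\<^sub>v x) \<le> spectral_norm Y * (x \<bullet> x)" unfolding lam_def .
  qed
  show "\<exists>x\<in>carrier_vec q. x \<bullet> x \<le> 1 \<and> x \<bullet> (Y *\<^sub>v x) = spectral_norm Y"
    using lam_in
  proof
    assume l0: "lam = 0"
    have "0\<^sub>v q \<in> carrier_vec q" by simp
    moreover have "0\<^sub>v q \<bullet> 0\<^sub>v q \<le> (1::real)" by simp
    moreover have "0\<^sub>v q \<bullet> (Y *\<^sub>v 0\<^sub>v q) = spectral_norm Y" using l0 Yc unfolding lam_def by simp
    ultimately show ?thesis by blast
  next
    assume "\<exists>k<q. d k = lam"
    then obtain k where k: "k < q" "d k = lam" by blast
    define x where "x = vec q (p k)"
    have x: "x \<in> carrier_vec q" unfolding x_def by simp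
    have "x \<bullet> x = (\<Sum>i<q. p k i * p k i)" unfolding x_def by (simp add: scalar_prod_def lessThan_atLeast0)
    also have "\<dots> = 1" using orth' k by simp
    finally have xx: "x \<bullet> x = 1" .
    have "x \<bullet> (Y *\<^sub>v x) = (\<Sum>i<q. \<Sum>j<q. p k i * Y $$ (i,j) * p k j)"
      unfolding quadform[OF Yc x] unfolding x_def by (intro sum.cong refl) auto
    also have "\<dots> = d k" by (rule quad_eig[OF k(1)])
    finally have "x \<bullet> (Y *\<^sub>v x) = spectral_norm Y" using k unfolding lam_def by simp
    moreover have "x \<bullet> x \<le> 1" using xx by simp
    ultimately show ?thesis using x by blast
  qed
  show "0 \<le> nuclear_norm Y - spectral_norm Y" using lamS unfolding nuc lam_def by simp
  show "nuclear_norm Y - spectral_norm Y = 0 \<longleftrightarrow> vec_space.rank q Y \<le> 1"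
  proof
    assume "nuclear_norm Y - spectral_norm Y = 0"
    hence Slam: "S = lam" unfolding nuc lam_def by simp
    have "\<exists>j. \<forall>k<q. k \<noteq> j \<longrightarrow> d k = 0"
      using lam_in
    proof
      assume "lam = 0"
      hence "S = 0" using Slam by simp
      hence "\<forall>k\<in>{..<q}. d k = 0" unfolding S_def using dnn by (subst sum_nonneg_eq_0_iff[symmetric]) auto
      thus ?thesis by auto
    next
      assume "\<exists>k<q. d k = lam"
      then obtain j where j: "j < q" "d j = lam" by blast
      have "S = d j + (\<Sum>k\<in>{..<q} - {j}. d k)" unfolding S_def using j by (simp add: sum.remove)
      hence "(\<Sum>k\<in>{..<q} - {j}. d k) = 0" using Slam j by simp
      hence "\<forall>k\<in>{..<q} - {j}. d k = 0" using dnn by (subst sum_nonneg_eq_0_iff[symmetric]) auto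
      thus ?thesis by auto
    qed
    then obtain j where jz: "\<forall>k<q. k \<noteq> j \<longrightarrow> d k = 0" by blast
    have entries: "Y $$ (a,b) = (d j * p j a) * (if j < q then p j b else 0)" if "a < q" "b < q" for a b
    proof -
      have "Y $$ (a,b) = (\<Sum>k<q. d k * p k a * p k b)" using rep that by simp
      also have "\<dots> = (\<Sum>k<q. if k = j then d j * p j a * p j b else 0)"
        using jz by (intro sum.cong refl) auto
      also have "\<dots> = (d j * p j a) * (if j < q then p j b else 0)" by (simp add: sum.delta)
      finally show ?thesis .
    qed
    show "vec_space.rank q Y \<le> 1"
      by (rule vec_space.rank_le_1_product_entries[OF Yc]) (use entries Yc in auto)
  next
    assume r: "vec_space.rank q Y \<le> 1"
    have minor: "Y $$ (r,r) * Y $$ (i,i) = Y $$ (r,i) * Y $$ (r,i)" if "r < q" "i < q" for r i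
    proof (cases "r < i")
      case True
      from rank_le1_minor[OF Yc r True \<open>i < q\<close>] Ysym[OF that] show ?thesis by simp
    next
      case False
      show ?thesis
      proof (cases "r = i")
        case True thus ?thesis by simp
      next
        case False
        with \<open>\<not> r < i\<close> have "i < r" by simp
        from rank_le1_minor[OF Yc r this \<open>r < q\<close>] Ysym[OF that] show ?thesis by (simp add: mult.commute)
      qed
    qed
    have "S * S = (\<Sum>i<q. \<Sum>r<q. Y $$ (r,r) * Y $$ (i,i))"
      unfolding S_def trace_eq[symmetric] by (simp add: sum_product mult.commute)
    also have "\<dots> = (\<Sum>i<q. \<Sum>r<q. Y $$ (r,i) * Y $$ (r,i))"
      using minor by (intro sum.cong refl) auto
    also have "\<dots> = (\<Sum>k<q. (d k)^2)" by (rule frob_eq)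
    also have "\<dots> \<le> (\<Sum>k<q. lam * d k)"
      by (intro sum_mono) (use lam_ge dnn in \<open>auto simp: power2_eq_square intro: mult_right_mono\<close>)
    also have "\<dots> = lam * S" unfolding S_def by (simp add: sum_distrib_left)
    finally have SS: "S * S \<le> lam * S" .
    have "S = lam"
    proof (cases "S = 0")
      case True thus ?thesis using lamS lam0 by simp
    next
      case False
      hence "S > 0" using S0 by simp
      with SS have "S \<le> lam" by (simp add: mult_le_cancel_right)
      thus ?thesis using lamS by simp
    qed
    thus "nuclear_norm Y - spectral_norm Y = 0" unfolding nuc lam_def by simp
  qed
qed

lemma trace_inner_entries:
  assumes "X \<in> carrier_mat q q" "Y \<in> carrier_mat q q"
  shows "trace_inner X Y = (\<Sum>i<q. \<Sum>r<q. X $$ (r,i) * Y $$ (r,i))"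
  unfolding trace_inner_def using assms
  by (intro sum.cong refl) (auto simp: scalar_prod_def col_def lessThan_atLeast0)

lemma frob_entries:
  assumes "X \<in> carrier_mat q q"
  shows "frob_norm X = sqrt (\<Sum>i<q. \<Sum>r<q. (X $$ (r,i))^2)"
  unfolding frob_norm_def trace_inner_entries[OF assms assms] by (simp add: power2_eq_square)

lemma entry_le_frob:
  assumes X: "X \<in> carrier_mat q q" and r: "r < q" and i: "i < q"
  shows "\<bar>X $$ (r,i)\<bar> \<le> frob_norm X"
proof -
  have "(X $$ (r,i))^2 \<le> (\<Sum>r'<q. (X $$ (r',i))^2)"
    by (rule member_le_sum) (use r in auto)
  also have "\<dots> \<le> (\<Sum>i'<q. \<Sum>r'<q. (X $$ (r',i'))^2)"
    by (rule member_le_sum[where f = "\<lambda>i'. \<Sum>r'<q. (X $$ (r',i'))^2"]) (use i in \<open>auto intro: sum_nonneg\<close>)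
  finally have "sqrt ((X $$ (r,i))^2) \<le> frob_norm X"
    unfolding frob_entries[OF X] by (rule real_sqrt_le_mono)
  thus ?thesis by simp
qed

lemma frob_nonneg: "X \<in> carrier_mat q q \<Longrightarrow> 0 \<le> frob_norm X"
  by (subst frob_entries) (auto intro!: sum_nonneg)

definition mconv :: "nat \<Rightarrow> (nat \<Rightarrow> real mat) \<Rightarrow> real mat \<Rightarrow> bool" where
  "mconv q Ys L \<longleftrightarrow> (\<forall>i<q. \<forall>j<q. (\<lambda>k. Ys k $$ (i,j)) \<longlonglongrightarrow> L $$ (i,j))"

lemma bw_real:
  fixes s :: "nat \<Rightarrow> real"
  assumes "\<forall>k. \<bar>s k\<bar> \<le> B"
  shows "\<exists>r. strict_mono r \<and> convergent (s \<circ> r)"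
proof -
  obtain r where r: "strict_mono r" "monoseq (\<lambda>k. s (r k))" using seq_monosub by blast
  have "Bseq (\<lambda>k. s (r k))" using assms by (intro BseqI'[of _ B]) auto
  hence "convergent (\<lambda>k. s (r k))" using r(2) Bseq_monoseq_convergent by blast
  thus ?thesis using r(1) by (auto simp: o_def)
qed

lemma bw_finite:
  fixes f :: "nat \<Rightarrow> 'a \<Rightarrow> real"
  assumes "finite I" and "\<forall>k. \<forall>x\<in>I. \<bar>f k x\<bar> \<le> B"
  shows "\<exists>r. strict_mono r \<and> (\<forall>x\<in>I. convergent (\<lambda>k. f (r k) x))"
  using assms
proof (induction I rule: finite_induct)
  case empty
  show ?case by (rule exI[of _ id]) (auto simp: strict_mono_def)
next
  case (insert x I)
  from insert.IH insert.prems obtain r1 where r1: "strict_mono r1" "\<forall>y\<in>I. convergent (\<lambda>k. f (r1 k) y)"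
    by auto
  have "\<forall>k. \<bar>f (r1 k) x\<bar> \<le> B" using insert.prems by auto
  from bw_real[OF this] obtain r2 where r2: "strict_mono r2" "convergent ((\<lambda>k. f (r1 k) x) \<circ> r2)"
    by blast
  have "strict_mono (r1 \<circ> r2)" using r1(1) r2(1) by (simp add: strict_mono_o)
  moreover have "\<forall>y\<in>insert x I. convergent (\<lambda>k. f ((r1 \<circ> r2) k) y)"
  proof
    fix y assume "y \<in> insert x I"
    then consider "y = x" | "y \<in> I" by auto
    thus "convergent (\<lambda>k. f ((r1 \<circ> r2) k) y)"
    proof cases
      case 1 thus ?thesis using r2(2) by (simp add: o_def)
    next
      case 2
      then obtain l where "(\<lambda>k. f (r1 k) y) \<longlonglongrightarrow> l" using r1(2) convergent_def by blast
      from LIMSEQ_subseq_LIMSEQ[OF this r2(1)] show ?thesis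
        by (auto simp: convergent_def o_def)
    qed
  qed
  ultimately show ?case by blast
qed

lemma bw_mat:
  fixes Ys :: "nat \<Rightarrow> real mat"
  assumes "\<forall>k. \<forall>i<q. \<forall>j<q. \<bar>Ys k $$ (i,j)\<bar> \<le> B"
  shows "\<exists>r L. strict_mono r \<and> L \<in> carrier_mat q q \<and> mconv q (Ys \<circ> r) L"
proof -
  have "\<forall>k. \<forall>x\<in>{..<q} \<times> {..<q}. \<bar>Ys k $$ x\<bar> \<le> B" using assms by auto
  from bw_finite[of "{..<q} \<times> {..<q}" "\<lambda>k x. Ys k $$ x" B] this obtain r where r: "strict_mono r"
    and c: "\<forall>x\<in>{..<q} \<times> {..<q}. convergent (\<lambda>k. Ys (r k) $$ x)" by auto
  define L where "L = mat q q (\<lambda>x. lim (\<lambda>k. Ys (r k) $$ x))"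
  have "mconv q (Ys \<circ> r) L" unfolding mconv_def L_def
    using c by (auto simp: convergent_LIMSEQ_iff)
  moreover have "L \<in> carrier_mat q q" unfolding L_def by simp
  ultimately show ?thesis using r by blast
qed

definition bmat :: "nat \<Rightarrow> nat \<Rightarrow> nat \<Rightarrow> real mat" where
  "bmat q i j = mat q q (\<lambda>(a,b). ((if a = i \<and> b = j then 1 else 0) + (if a = j \<and> b = i then 1 else 0)) / 2)"

lemma bmat_symm: "bmat q i j \<in> symm_mats q"
proof -
  have "transpose_mat (bmat q i j) = bmat q i j"
  proof (rule eq_matI)
    fix a b assume "a < dim_row (bmat q i j)" "b < dim_col (bmat q i j)"
    hence ab: "a < q" "b < q" unfolding bmat_def by auto
    have "transpose_mat (bmat q i j) $$ (a,b) = bmat q i j $$ (b,a)" using ab unfolding bmat_def by simp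
    also have "\<dots> = ((if b = i \<and> a = j then 1 else 0) + (if b = j \<and> a = i then 1 else 0)) / 2"
      using ab unfolding bmat_def by simp
    also have "\<dots> = ((if a = i \<and> b = j then 1 else 0) + (if a = j \<and> b = i then 1 else 0)) / 2"
      by (simp only: conj_commute add.commute)
    also have "\<dots> = bmat q i j $$ (a,b)" using ab unfolding bmat_def by simp
    finally show "transpose_mat (bmat q i j) $$ (a,b) = bmat q i j $$ (a,b)" .
  qed (auto simp: bmat_def)
  thus ?thesis unfolding symm_mats_def bmat_def by simp
qed

lemma symm_add: "X \<in> symm_mats q \<Longrightarrow> Y \<in> symm_mats q \<Longrightarrow> X + Y \<in> symm_mats q"
  unfolding symm_mats_def using transpose_add[of X q q Y] by auto

lemma symm_smult: assumes "X \<in> symm_mats q" shows "c \<cdot>\<^sub>m X \<in> symm_mats q"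
proof -
  have "transpose_mat (c \<cdot>\<^sub>m X) = c \<cdot>\<^sub>m transpose_mat X" by (rule eq_matI) auto
  thus ?thesis using assms unfolding symm_mats_def by auto
qed

lemma symm_zero: "0\<^sub>m q q \<in> symm_mats q"
  unfolding symm_mats_def by auto

lemma A_zero:
  assumes A: "linear_map_Sq q m A"
  shows "A (0\<^sub>m q q) = 0\<^sub>v m"
proof -
  have c: "A (0\<^sub>m q q) \<in> carrier_vec m" using A symm_zero unfolding linear_map_Sq_def by blast
  have "A ((0::real) \<cdot>\<^sub>m 0\<^sub>m q q) = 0 \<cdot>\<^sub>v A (0\<^sub>m q q)"
    using A symm_zero unfolding linear_map_Sq_def by blast
  moreover have "(0::real) \<cdot>\<^sub>m 0\<^sub>m q q = 0\<^sub>m q q" by (auto intro!: eq_matI)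
  ultimately have e: "A (0\<^sub>m q q) = 0 \<cdot>\<^sub>v A (0\<^sub>m q q)" by simp
  show ?thesis
  proof (rule eq_vecI)
    fix i assume "i < dim_vec (0\<^sub>v m)"
    hence i: "i < m" by simp
    have "A (0\<^sub>m q q) $ i = (0 \<cdot>\<^sub>v A (0\<^sub>m q q)) $ i" using e by simp
    also have "\<dots> = 0" using c i by simp
    finally show "A (0\<^sub>m q q) $ i = 0\<^sub>v m $ i" using i by simp
  qed (use c in simp)
qed

lemma lin_foldr:
  assumes A: "linear_map_Sq q m A" and M: "\<forall>x\<in>set xs. M x \<in> symm_mats q"
  shows "foldr (\<lambda>x acc. c x \<cdot>\<^sub>m M x + acc) xs (0\<^sub>m q q) \<in> symm_mats q \<and>
         A (foldr (\<lambda>x acc. c x \<cdot>\<^sub>m M x + acc) xs (0\<^sub>m q q)) = foldr (\<lambda>x acc. c x \<cdot>\<^sub>v A (M x) + acc) xs (0\<^sub>v m)"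
  using M
proof (induction xs)
  case Nil
  show ?case using symm_zero A_zero[OF A] by simp
next
  case (Cons x xs)
  let ?S = "foldr (\<lambda>x acc. c x \<cdot>\<^sub>m M x + acc) xs (0\<^sub>m q q)"
  from Cons have S: "?S \<in> symm_mats q" and AS: "A ?S = foldr (\<lambda>x acc. c x \<cdot>\<^sub>v A (M x) + acc) xs (0\<^sub>v m)"
    by auto
  have Mx: "M x \<in> symm_mats q" using Cons.prems by simp
  have cM: "c x \<cdot>\<^sub>m M x \<in> symm_mats q" by (rule symm_smult[OF Mx])
  have "A (c x \<cdot>\<^sub>m M x + ?S) = A (c x \<cdot>\<^sub>m M x) + A ?S"
    using A cM S unfolding linear_map_Sq_def by blast
  also have "A (c x \<cdot>\<^sub>m M x) = c x \<cdot>\<^sub>v A (M x)"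
    using A Mx unfolding linear_map_Sq_def by blast
  finally show ?case using symm_add[OF cM S] AS by simp
qed

lemma foldr_mat_entry:
  assumes "\<forall>x\<in>set xs. M x \<in> carrier_mat q q" "a < q" "b < q"
  shows "foldr (\<lambda>x acc. c x \<cdot>\<^sub>m M x + acc) xs (0\<^sub>m q q) $$ (a,b) = (\<Sum>x\<leftarrow>xs. c x * M x $$ (a,b))"
proof -
  have "foldr (\<lambda>x acc. c x \<cdot>\<^sub>m M x + acc) xs (0\<^sub>m q q) \<in> carrier_mat q q \<and>
        foldr (\<lambda>x acc. c x \<cdot>\<^sub>m M x + acc) xs (0\<^sub>m q q) $$ (a,b) = (\<Sum>x\<leftarrow>xs. c x * M x $$ (a,b))"
    using assms by (induction xs) auto
  thus ?thesis by simp
qed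

lemma foldr_vec_entry:
  assumes "\<forall>x\<in>set xs. v x \<in> carrier_vec m" "t < m"
  shows "foldr (\<lambda>x acc. c x \<cdot>\<^sub>v v x + acc) xs (0\<^sub>v m) $ t = (\<Sum>x\<leftarrow>xs. c x * v x $ t)"
proof -
  have "foldr (\<lambda>x acc. c x \<cdot>\<^sub>v v x + acc) xs (0\<^sub>v m) \<in> carrier_vec m \<and>
        foldr (\<lambda>x acc. c x \<cdot>\<^sub>v v x + acc) xs (0\<^sub>v m) $ t = (\<Sum>x\<leftarrow>xs. c x * v x $ t)"
    using assms by (induction xs) auto
  thus ?thesis by simp
qed

lemma sum_prod_list: "(\<Sum>x\<leftarrow>List.product [0..<q] [0..<q]. (f x::real)) = (\<Sum>i<q. \<Sum>j<q. f (i,j))"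
proof -
  have "(\<Sum>x\<leftarrow>List.product [0..<q] [0..<q]. f x) = sum f (set (List.product [0..<q] [0..<q]))"
    by (rule sum_list_distinct_conv_sum_set) (simp add: distinct_product)
  also have "set (List.product [0..<q] [0..<q]) = {..<q} \<times> {..<q}" by auto
  also have "sum f ({..<q} \<times> {..<q}) = (\<Sum>i<q. \<Sum>j<q. f (i,j))"
    by (simp add: sum.cartesian_product)
  finally show ?thesis .
qed

lemma double_delta:
  assumes "a < (q::nat)" "b < q"
  shows "(\<Sum>i<q. \<Sum>j<q. if i = a then if j = b then (g i j::real) else 0 else 0) = g a b"
proof -
  have "(\<Sum>j<q. if i = a then if j = b then g i j else 0 else 0) = (if i = a then g i b else 0)" for i
    by (cases "i = a") (simp_all add: sum_delta0 assms)
  hence "(\<Sum>i<q. \<Sum>j<q. if i = a then if j = b then g i j else 0 else 0) = (\<Sum>i<q. if i = a then g i b else 0)"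
    by simp
  also have "\<dots> = g a b" using assms by (simp add: sum_delta0)
  finally show ?thesis .
qed

lemma bmat_sum:
  assumes a: "a < q" and b: "b < q" and X: "X \<in> symm_mats q"
  shows "(\<Sum>i<q. \<Sum>j<q. X $$ (i,j) * bmat q i j $$ (a,b)) = X $$ (a,b)"
proof -
  have Xc: "X \<in> carrier_mat q q" and Xt: "transpose_mat X = X" using X unfolding symm_mats_def by auto
  have Xs: "X $$ (b,a) = X $$ (a,b)"
  proof -
    have "transpose_mat X $$ (a,b) = X $$ (b,a)" using Xc a b by simp
    thus ?thesis using Xt by simp
  qed
  have "(\<Sum>i<q. \<Sum>j<q. X $$ (i,j) * bmat q i j $$ (a,b)) =
        (\<Sum>i<q. \<Sum>j<q. (if i = a then (if j = b then X $$ (i,j) / 2 else 0) else 0)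
                     + (if i = b then (if j = a then X $$ (i,j) / 2 else 0) else 0))"
  proof (intro sum.cong refl)
    fix i j assume "i \<in> {..<q}" "j \<in> {..<q}"
    hence "bmat q i j $$ (a,b) = ((if a = i \<and> b = j then 1 else 0) + (if a = j \<and> b = i then 1 else 0)) / 2"
      using a b unfolding bmat_def by simp
    thus "X $$ (i,j) * bmat q i j $$ (a,b) = (if i = a then (if j = b then X $$ (i,j) / 2 else 0) else 0)
                     + (if i = b then (if j = a then X $$ (i,j) / 2 else 0) else 0)"
      by (cases "i = a"; cases "j = b"; cases "i = b"; cases "j = a") auto
  qed
  also have "\<dots> = X $$ (a,b) / 2 + X $$ (b,a) / 2"
    unfolding sum.distrib using double_delta[OF a b, of "\<lambda>i j. X $$ (i,j) / 2"]
      double_delta[OF b a, of "\<lambda>i j. X $$ (i,j) / 2"] by simp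
  also have "\<dots> = X $$ (a,b)" using Xs by simp
  finally show ?thesis .
qed

lemma A_expand:
  assumes A: "linear_map_Sq q m A" and X: "X \<in> symm_mats q" and t: "t < m"
  shows "A X $ t = (\<Sum>i<q. \<Sum>j<q. X $$ (i,j) * A (bmat q i j) $ t)"
proof -
  define ps where "ps = List.product [0..<q] [0..<q]"
  define F where "F = foldr (\<lambda>x acc. X $$ x \<cdot>\<^sub>m bmat q (fst x) (snd x) + acc) ps (0\<^sub>m q q)"
  have Msym: "\<forall>x\<in>set ps. bmat q (fst x) (snd x) \<in> symm_mats q" using bmat_symm by blast
  have Mc: "\<forall>x\<in>set ps. bmat q (fst x) (snd x) \<in> carrier_mat q q" using bmat_symm unfolding symm_mats_def by blast
  have Xc: "X \<in> carrier_mat q q" using X unfolding symm_mats_def by auto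
  have FX: "F = X"
  proof (rule eq_matI)
    fix a b assume "a < dim_row X" "b < dim_col X"
    hence a: "a < q" and b: "b < q" using Xc by auto
    have "F $$ (a,b) = (\<Sum>x\<leftarrow>ps. X $$ x * bmat q (fst x) (snd x) $$ (a,b))"
      unfolding F_def by (rule foldr_mat_entry[OF Mc a b])
    also have "\<dots> = X $$ (a,b)" unfolding ps_def sum_prod_list using bmat_sum[OF a b X] by simp
    finally show "F $$ (a,b) = X $$ (a,b)" .
  next
    show "dim_row F = dim_row X" "dim_col F = dim_col X"
      using lin_foldr[OF A Msym, of "\<lambda>x. X $$ x"] Xc unfolding F_def symm_mats_def by auto
  qed
  have "A F = foldr (\<lambda>x acc. X $$ x \<cdot>\<^sub>v A (bmat q (fst x) (snd x)) + acc) ps (0\<^sub>v m)"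
    using lin_foldr[OF A Msym, of "\<lambda>x. X $$ x"] unfolding F_def by blast
  hence "A X $ t = foldr (\<lambda>x acc. X $$ x \<cdot>\<^sub>v A (bmat q (fst x) (snd x)) + acc) ps (0\<^sub>v m) $ t"
    using FX by simp
  also have "\<dots> = (\<Sum>x\<leftarrow>ps. X $$ x * A (bmat q (fst x) (snd x)) $ t)"
    by (rule foldr_vec_entry) (use A Msym t in \<open>auto simp: linear_map_Sq_def\<close>)
  also have "\<dots> = (\<Sum>i<q. \<Sum>j<q. X $$ (i,j) * A (bmat q i j) $ t)"
    unfolding ps_def sum_prod_list by simp
  finally show ?thesis .
qed

lemma quad_tendsto:
  fixes Ys :: "nat \<Rightarrow> real mat"
  assumes "mconv q Ys L"
  shows "(\<lambda>k. \<Sum>i<q. \<Sum>j<q. x i * Ys k $$ (i,j) * y j) \<longlonglongrightarrow> (\<Sum>i<q. \<Sum>j<q. x i * L $$ (i,j) * y j)"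
  using assms unfolding mconv_def
  by (intro tendsto_sum tendsto_mult_right tendsto_mult_left) auto

lemma omega_closed:
  fixes Ys :: "nat \<Rightarrow> real mat"
  assumes A: "linear_map_Sq q m A" and Ys: "\<forall>k. Ys k \<in> Omega_set q A b"
    and L: "L \<in> carrier_mat q q" and conv: "mconv q Ys L"
  shows "L \<in> Omega_set q A b"
proof -
  have Ysym: "Ys k \<in> symm_mats q" and Ypsd: "Ys k \<in> psd_cone q" and Ynn: "Ys k \<in> nonneg_mats q"
    and YA: "A (Ys k) = b" for k
    using Ys unfolding Omega_set_def psd_cone_def by auto
  have Yc: "Ys k \<in> carrier_mat q q" for k using Ysym unfolding symm_mats_def by auto
  have Yent: "Ys k $$ (i,j) = Ys k $$ (j,i)" if "i < q" "j < q" for k i j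
  proof -
    have "transpose_mat (Ys k) $$ (j,i) = Ys k $$ (i,j)" using Yc[of k] that by simp
    thus ?thesis using Ysym[of k] unfolding symm_mats_def by simp
  qed
  have lim: "(\<lambda>k. Ys k $$ (i,j)) \<longlonglongrightarrow> L $$ (i,j)" if "i < q" "j < q" for i j
    using conv that unfolding mconv_def by auto
  have Lt: "transpose_mat L = L"
  proof (rule eq_matI)
    fix i j assume "i < dim_row L" "j < dim_col L"
    hence ij: "i < q" "j < q" using L by auto
    have "(\<lambda>k. Ys k $$ (j,i)) \<longlonglongrightarrow> L $$ (i,j)" using lim[OF ij] Yent[OF ij] by simp
    from LIMSEQ_unique[OF lim[OF ij(2,1)] this] show "transpose_mat L $$ (i,j) = L $$ (i,j)"
      using ij L by simp
  qed (use L in auto)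
  have Ls: "L \<in> symm_mats q" unfolding symm_mats_def using L Lt by simp
  have Lpsd: "L \<in> psd_cone q" unfolding psd_cone_def
  proof (intro CollectI conjI ballI Ls)
    fix x :: "real vec" assume x: "x \<in> carrier_vec q"
    have "(\<lambda>k. \<Sum>i<q. \<Sum>j<q. x $ i * Ys k $$ (i,j) * x $ j) \<longlonglongrightarrow> (\<Sum>i<q. \<Sum>j<q. x $ i * L $$ (i,j) * x $ j)"
      by (rule quad_tendsto[OF conv])
    moreover have "\<forall>k. 0 \<le> (\<Sum>i<q. \<Sum>j<q. x $ i * Ys k $$ (i,j) * x $ j)"
    proof
      fix k
      have "0 \<le> x \<bullet> (Ys k *\<^sub>v x)" using Ypsd[of k] x unfolding psd_cone_def by auto
      thus "0 \<le> (\<Sum>i<q. \<Sum>j<q. x $ i * Ys k $$ (i,j) * x $ j)" using quadform[OF Yc x] by simp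
    qed
    ultimately have "0 \<le> (\<Sum>i<q. \<Sum>j<q. x $ i * L $$ (i,j) * x $ j)"
      by (intro LIMSEQ_le_const) auto
    thus "0 \<le> x \<bullet> (L *\<^sub>v x)" using quadform[OF L x] by simp
  qed
  have Lnn: "L \<in> nonneg_mats q" unfolding nonneg_mats_def
  proof (intro CollectI conjI allI impI Ls)
    fix i j assume ij: "i < q" "j < q"
    have "\<forall>k. 0 \<le> Ys k $$ (i,j)" using Ynn ij unfolding nonneg_mats_def by auto
    thus "0 \<le> L $$ (i,j)" using lim[OF ij] by (intro LIMSEQ_le_const) auto
  qed
  have bc: "b \<in> carrier_vec m" using YA[of 0] A Ysym[of 0] unfolding linear_map_Sq_def by metis
  have ALc: "A L \<in> carrier_vec m" using A Ls unfolding linear_map_Sq_def by blast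
  have "A L = b"
  proof (rule eq_vecI)
    fix t assume "t < dim_vec b"
    hence t: "t < m" using bc by simp
    have "(\<lambda>k. \<Sum>i<q. \<Sum>j<q. Ys k $$ (i,j) * A (bmat q i j) $ t) \<longlonglongrightarrow> (\<Sum>i<q. \<Sum>j<q. L $$ (i,j) * A (bmat q i j) $ t)"
      using lim by (intro tendsto_sum tendsto_mult_right) auto
    moreover have "(\<Sum>i<q. \<Sum>j<q. Ys k $$ (i,j) * A (bmat q i j) $ t) = b $ t" for k
      using A_expand[OF A Ysym t] YA by simp
    ultimately have "(\<lambda>k. b $ t) \<longlonglongrightarrow> (\<Sum>i<q. \<Sum>j<q. L $$ (i,j) * A (bmat q i j) $ t)" by simp
    hence "(\<Sum>i<q. \<Sum>j<q. L $$ (i,j) * A (bmat q i j) $ t) = b $ t"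
      using LIMSEQ_unique[OF _ tendsto_const] by blast
    thus "A L $ t = b $ t" using A_expand[OF A Ls t] by simp
  qed (use ALc bc in auto)
  thus ?thesis unfolding Omega_set_def using Lpsd Lnn by auto
qed

lemma spec_nonneg: "0 \<le> spectral_norm Y"
  unfolding spectral_norm_def by (intro Max_ge) auto

lemma frob_tendsto:
  fixes Ys :: "nat \<Rightarrow> real mat"
  assumes conv: "mconv q Ys L" and Yc: "\<forall>k. Ys k \<in> carrier_mat q q"
    and L: "L \<in> carrier_mat q q" and Z: "Z \<in> carrier_mat q q"
  shows "(\<lambda>k. frob_norm (Ys k - Z)) \<longlonglongrightarrow> frob_norm (L - Z)"
proof -
  have e1: "frob_norm (Ys k - Z) = sqrt (\<Sum>i<q. \<Sum>r<q. (Ys k $$ (r,i) - Z $$ (r,i))^2)" for k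
  proof -
    have "Ys k - Z \<in> carrier_mat q q" by (rule minus_carrier_mat[OF Z])
    from frob_entries[OF this] show ?thesis using Yc Z by simp
  qed
  have e2: "frob_norm (L - Z) = sqrt (\<Sum>i<q. \<Sum>r<q. (L $$ (r,i) - Z $$ (r,i))^2)"
  proof -
    have "L - Z \<in> carrier_mat q q" by (rule minus_carrier_mat[OF Z])
    from frob_entries[OF this] show ?thesis using L Z by simp
  qed
  show ?thesis unfolding e1 e2 using conv unfolding mconv_def
    by (intro tendsto_real_sqrt tendsto_sum tendsto_power tendsto_diff tendsto_const) auto
qed

lemma g_limit:
  fixes Ys :: "nat \<Rightarrow> real mat"
  assumes Yp: "\<forall>k. Ys k \<in> psd_cone q" and Lp: "L \<in> psd_cone q" and conv: "mconv q Ys L"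
    and g0: "(\<lambda>k. nuclear_norm (Ys k) - spectral_norm (Ys k)) \<longlonglongrightarrow> 0"
  shows "nuclear_norm L - spectral_norm L = 0"
proof -
  have Yc: "Ys k \<in> carrier_mat q q" for k using Yp unfolding psd_cone_def symm_mats_def by auto
  have Lc: "L \<in> carrier_mat q q" using Lp unfolding psd_cone_def symm_mats_def by auto
  define D where "D k = (\<Sum>i<q. \<Sum>j<q. \<bar>Ys k $$ (i,j) - L $$ (i,j)\<bar>)" for k
  have D0: "D \<longlonglongrightarrow> 0"
  proof -
    have "D \<longlonglongrightarrow> (\<Sum>i<q. \<Sum>j<q. \<bar>L $$ (i,j) - L $$ (i,j)\<bar>)"
      unfolding D_def using conv unfolding mconv_def
      by (intro tendsto_sum tendsto_rabs tendsto_diff tendsto_const) auto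
    thus ?thesis by simp
  qed
  have nuc: "(\<lambda>k. nuclear_norm (Ys k)) \<longlonglongrightarrow> nuclear_norm L"
    unfolding psd_facts(1)[OF Yp[rule_format]] psd_facts(1)[OF Lp] using conv unfolding mconv_def
    by (intro tendsto_sum) auto
  have spec: "spectral_norm (Ys k) \<le> spectral_norm L + D k" for k
  proof -
    obtain x where x: "x \<in> carrier_vec q" "x \<bullet> x \<le> 1" "x \<bullet> (Ys k *\<^sub>v x) = spectral_norm (Ys k)"
      using psd_facts(3)[OF Yp[rule_format, of k]] by blast
    have xi: "\<bar>x $ i\<bar> \<le> 1" if "i < q" for i
    proof -
      have "(x $ i)^2 \<le> (\<Sum>i<q. (x $ i)^2)" by (rule member_le_sum) (use that in auto)
      also have "\<dots> = x \<bullet> x" using x(1) by (simp add: scalar_prod_def lessThan_atLeast0 power2_eq_square)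
      finally have "(x $ i)^2 \<le> 1" using x(2) by simp
      thus ?thesis by (simp add: abs_square_le_1)
    qed
    have "spectral_norm (Ys k) = (\<Sum>i<q. \<Sum>j<q. x $ i * Ys k $$ (i,j) * x $ j)"
      using x(3) quadform[OF Yc x(1)] by simp
    also have "\<dots> = (\<Sum>i<q. \<Sum>j<q. x $ i * L $$ (i,j) * x $ j)
                    + (\<Sum>i<q. \<Sum>j<q. x $ i * (Ys k $$ (i,j) - L $$ (i,j)) * x $ j)"
      by (simp add: sum.distrib[symmetric] algebra_simps)
    also have "(\<Sum>i<q. \<Sum>j<q. x $ i * L $$ (i,j) * x $ j) \<le> spectral_norm L"
    proof -
      have "(\<Sum>i<q. \<Sum>j<q. x $ i * L $$ (i,j) * x $ j) = x \<bullet> (L *\<^sub>v x)" using quadform[OF Lc x(1)] by simp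
      also have "\<dots> \<le> spectral_norm L * (x \<bullet> x)" using psd_facts(2)[OF Lp] x(1) by blast
      also have "\<dots> \<le> spectral_norm L * 1" using x(2) spec_nonneg by (intro mult_left_mono) auto
      finally show ?thesis by simp
    qed
    also have "(\<Sum>i<q. \<Sum>j<q. x $ i * (Ys k $$ (i,j) - L $$ (i,j)) * x $ j) \<le> D k"
      unfolding D_def
    proof (intro sum_mono)
      fix i j assume "i \<in> {..<q}" "j \<in> {..<q}"
      hence "\<bar>x $ i\<bar> \<le> 1" "\<bar>x $ j\<bar> \<le> 1" using xi by auto
      hence "\<bar>x $ i * x $ j\<bar> \<le> 1" by (simp add: abs_mult mult_le_one)
      hence "\<bar>x $ i * x $ j\<bar> * \<bar>Ys k $$ (i,j) - L $$ (i,j)\<bar> \<le> 1 * \<bar>Ys k $$ (i,j) - L $$ (i,j)\<bar>"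
        by (intro mult_right_mono) auto
      moreover have "\<bar>x $ i * (Ys k $$ (i,j) - L $$ (i,j)) * x $ j\<bar> = \<bar>x $ i * x $ j\<bar> * \<bar>Ys k $$ (i,j) - L $$ (i,j)\<bar>"
        by (simp add: abs_mult)
      ultimately have "\<bar>x $ i * (Ys k $$ (i,j) - L $$ (i,j)) * x $ j\<bar> \<le> \<bar>Ys k $$ (i,j) - L $$ (i,j)\<bar>"
        by simp
      thus "x $ i * (Ys k $$ (i,j) - L $$ (i,j)) * x $ j \<le> \<bar>Ys k $$ (i,j) - L $$ (i,j)\<bar>" by linarith
    qed
    finally show ?thesis by simp
  qed
  have bound: "nuclear_norm L - spectral_norm L \<le>
      (nuclear_norm (Ys k) - spectral_norm (Ys k)) + (nuclear_norm L - nuclear_norm (Ys k)) + D k" for k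
    using spec[of k] by simp
  have "(\<lambda>k. (nuclear_norm (Ys k) - spectral_norm (Ys k)) + (nuclear_norm L - nuclear_norm (Ys k)) + D k) \<longlonglongrightarrow> 0 + (nuclear_norm L - nuclear_norm L) + 0"
    by (intro tendsto_add tendsto_diff g0 nuc D0 tendsto_const)
  hence "nuclear_norm L - spectral_norm L \<le> 0"
    using bound by (intro LIMSEQ_le_const[where a = "nuclear_norm L - spectral_norm L"]) auto
  moreover have "0 \<le> nuclear_norm L - spectral_norm L" by (rule psd_facts(4)[OF Lp])
  ultimately show ?thesis by simp
qed

lemma lipschitz:
  assumes C: "C \<in> carrier_mat q q" and Y: "Y \<in> carrier_mat q q" and Z: "Z \<in> carrier_mat q q"
  shows "trace_inner C Z \<le> trace_inner C Y + (\<Sum>i<q. \<Sum>r<q. \<bar>C $$ (r,i)\<bar>) * frob_norm (Y - Z)"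
proof -
  have YZ: "Y - Z \<in> carrier_mat q q" by (rule minus_carrier_mat[OF Z])
  have "trace_inner C Z - trace_inner C Y = (\<Sum>i<q. \<Sum>r<q. C $$ (r,i) * (Z $$ (r,i) - Y $$ (r,i)))"
    unfolding trace_inner_entries[OF C Z] trace_inner_entries[OF C Y]
    by (simp add: sum_subtractf[symmetric] algebra_simps)
  also have "\<dots> \<le> (\<Sum>i<q. \<Sum>r<q. \<bar>C $$ (r,i)\<bar> * frob_norm (Y - Z))"
  proof (intro sum_mono)
    fix i r assume ir: "i \<in> {..<q}" "r \<in> {..<q}"
    have "\<bar>(Y - Z) $$ (r,i)\<bar> \<le> frob_norm (Y - Z)" using entry_le_frob[OF YZ] ir by auto
    hence "\<bar>Z $$ (r,i) - Y $$ (r,i)\<bar> \<le> frob_norm (Y - Z)" using ir Y Z by simp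
    hence "\<bar>C $$ (r,i) * (Z $$ (r,i) - Y $$ (r,i))\<bar> \<le> \<bar>C $$ (r,i)\<bar> * frob_norm (Y - Z)"
      by (simp add: abs_mult mult_left_mono)
    thus "C $$ (r,i) * (Z $$ (r,i) - Y $$ (r,i)) \<le> \<bar>C $$ (r,i)\<bar> * frob_norm (Y - Z)" by linarith
  qed
  also have "\<dots> = (\<Sum>i<q. \<Sum>r<q. \<bar>C $$ (r,i)\<bar>) * frob_norm (Y - Z)"
    by (simp add: sum_distrib_right)
  finally show ?thesis by simp
qed

lemma omega_psd: "Y \<in> Omega_set q A b \<Longrightarrow> Y \<in> psd_cone q"
  unfolding Omega_set_def by auto

lemma omega_carrier: "Y \<in> Omega_set q A b \<Longrightarrow> Y \<in> carrier_mat q q"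
  unfolding Omega_set_def psd_cone_def symm_mats_def by auto

lemma omega_rank_iff:
  assumes "Y \<in> Omega_set q A b"
  shows "Y \<in> rank_le1_set q \<longleftrightarrow> nuclear_norm Y - spectral_norm Y = 0"
  using psd_facts(5)[OF omega_psd[OF assms]] assms
  unfolding rank_le1_set_def Omega_set_def psd_cone_def by auto

lemma error_bound:
  fixes q m :: nat and A :: "real mat \<Rightarrow> real vec" and b :: "real vec"
  defines "g \<equiv> \<lambda>Y. nuclear_norm Y - spectral_norm Y"
  assumes A: "linear_map_Sq q m A"
    and bounded: "\<exists>B. \<forall>Y \<in> Omega_set q A b. frob_norm Y \<le> B"
    and inter: "Omega_set q A b \<inter> rank_le1_set q \<noteq> {}"
    and calm: "\<forall>Y \<in> {Y \<in> Omega_set q A b. nuclear_norm Y - spectral_norm Y = 0}.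
                 calm_at (\<lambda>w. {Y \<in> Omega_set q A b. nuclear_norm Y - spectral_norm Y = w}) 0 Y"
  shows "\<exists>\<kappa>>0. \<forall>Y\<in>Omega_set q A b. \<exists>Z\<in>Omega_set q A b. g Z = 0 \<and> frob_norm (Y - Z) \<le> \<kappa> * g Y"
proof (rule ccontr)
  let ?O = "Omega_set q A b"
  assume neg: "\<not> ?thesis"
  have H: "\<forall>k::nat. \<exists>Y. Y \<in> ?O \<and> (\<forall>Z\<in>?O. g Z = 0 \<longrightarrow> (real k + 1) * g Y < frob_norm (Y - Z))"
  proof
    fix k :: nat
    have pos: "real k + 1 > 0" by simp
    have "\<not> (\<forall>Y\<in>?O. \<exists>Z\<in>?O. g Z = 0 \<and> frob_norm (Y - Z) \<le> (real k + 1) * g Y)"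
      using neg pos by blast
    thus "\<exists>Y. Y \<in> ?O \<and> (\<forall>Z\<in>?O. g Z = 0 \<longrightarrow> (real k + 1) * g Y < frob_norm (Y - Z))"
      by (auto simp: not_le)
  qed
  have "\<exists>Ys. \<forall>k. Ys k \<in> ?O \<and> (\<forall>Z\<in>?O. g Z = 0 \<longrightarrow> (real k + 1) * g (Ys k) < frob_norm (Ys k - Z))"
    using H by (rule choice)
  then obtain Ys where Ys: "\<And>k. Ys k \<in> ?O"
    and Yb: "\<And>k Z. Z \<in> ?O \<Longrightarrow> g Z = 0 \<Longrightarrow> (real k + 1) * g (Ys k) < frob_norm (Ys k - Z)"
    by blast
  obtain B where B: "\<forall>Y\<in>?O. frob_norm Y \<le> B" using bounded by blast
  have Yc: "Ys k \<in> carrier_mat q q" for k using omega_carrier[OF Ys] .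
  have "\<forall>k. \<forall>i<q. \<forall>j<q. \<bar>Ys k $$ (i,j)\<bar> \<le> B"
  proof (intro allI impI)
    fix k i j assume i: "i < q" and j: "j < q"
    have "\<bar>Ys k $$ (i,j)\<bar> \<le> frob_norm (Ys k)" by (rule entry_le_frob[OF Yc i j])
    also have "\<dots> \<le> B" using B Ys by blast
    finally show "\<bar>Ys k $$ (i,j)\<bar> \<le> B" .
  qed
  from bw_mat[OF this] obtain r L where r: "strict_mono r" and Lc: "L \<in> carrier_mat q q"
    and conv: "mconv q (Ys \<circ> r) L" by blast
  define Y' where "Y' = Ys \<circ> r"
  have Y'O: "\<forall>k. Y' k \<in> ?O" unfolding Y'_def using Ys by simp
  have LO: "L \<in> ?O" by (rule omega_closed[OF A Y'O Lc conv[folded Y'_def]])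
  obtain Z0 where Z0: "Z0 \<in> ?O" "Z0 \<in> rank_le1_set q" using inter by blast
  have gZ0: "g Z0 = 0" using omega_rank_iff[OF Z0(1)] Z0(2) unfolding g_def by simp
  have gnn: "0 \<le> g Y" if "Y \<in> ?O" for Y
    using psd_facts(4)[OF omega_psd[OF that]] unfolding g_def by simp
  have Y'c: "\<forall>k. Y' k \<in> carrier_mat q q" using Y'O omega_carrier by blast
  have up: "g (Y' k) \<le> frob_norm (Y' k - Z0) * inverse (real (Suc (r k)))" for k
  proof -
    have "(real (r k) + 1) * g (Y' k) < frob_norm (Y' k - Z0)"
      using Yb[OF Z0(1) gZ0, of "r k"] unfolding Y'_def by simp
    thus ?thesis by (simp add: field_simps)
  qed
  have inv0: "(\<lambda>k. inverse (real (Suc (r k)))) \<longlonglongrightarrow> 0"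
    using LIMSEQ_subseq_LIMSEQ[OF LIMSEQ_inverse_real_of_nat r] by (simp add: o_def)
  have fr: "(\<lambda>k. frob_norm (Y' k - Z0)) \<longlonglongrightarrow> frob_norm (L - Z0)"
    by (rule frob_tendsto[OF conv[folded Y'_def] Y'c Lc omega_carrier[OF Z0(1)]])
  have "(\<lambda>k. frob_norm (Y' k - Z0) * inverse (real (Suc (r k)))) \<longlonglongrightarrow> frob_norm (L - Z0) * 0"
    by (intro tendsto_mult fr inv0)
  hence h0: "(\<lambda>k. frob_norm (Y' k - Z0) * inverse (real (Suc (r k)))) \<longlonglongrightarrow> 0" by simp
  have ev1: "eventually (\<lambda>k. 0 \<le> g (Y' k)) sequentially"
    by (rule always_eventually) (use gnn Y'O in blast)
  have ev2: "eventually (\<lambda>k. g (Y' k) \<le> frob_norm (Y' k - Z0) * inverse (real (Suc (r k)))) sequentially"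
    by (rule always_eventually) (use up in blast)
  have gY'0: "(\<lambda>k. g (Y' k)) \<longlonglongrightarrow> 0"
    by (rule real_tendsto_sandwich[OF ev1 ev2 tendsto_const h0])
  have gL: "g L = 0"
    using g_limit[of Y' q L] gY'0 Y'O LO conv unfolding g_def Y'_def by (auto intro: omega_psd)
  have "L \<in> {Y \<in> ?O. nuclear_norm Y - spectral_norm Y = 0}" using LO gL unfolding g_def by simp
  with calm have "calm_at (\<lambda>w. {Y \<in> ?O. nuclear_norm Y - spectral_norm Y = w}) 0 L" by blast
  then obtain \<alpha> \<epsilon> \<delta> where al: "\<alpha> > 0" and ep: "\<epsilon> > 0" and de: "\<delta> > 0"
    and cl0: "\<forall>x. \<bar>x - 0\<bar> < \<epsilon> \<longrightarrow> (\<forall>Y\<in>{Y \<in> ?O. nuclear_norm Y - spectral_norm Y = x}.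
          frob_norm (Y - L) < \<delta> \<longrightarrow> (\<exists>Z\<in>{Y \<in> ?O. nuclear_norm Y - spectral_norm Y = 0}. frob_norm (Y - Z) \<le> \<alpha> * \<bar>x - 0\<bar>))"
    unfolding calm_at_def by blast
  have cl: "\<And>x. \<bar>x - 0\<bar> < \<epsilon> \<Longrightarrow> \<forall>Y\<in>{Y \<in> ?O. nuclear_norm Y - spectral_norm Y = x}.
          frob_norm (Y - L) < \<delta> \<longrightarrow> (\<exists>Z\<in>{Y \<in> ?O. nuclear_norm Y - spectral_norm Y = 0}. frob_norm (Y - Z) \<le> \<alpha> * \<bar>x - 0\<bar>)"
    using cl0 by blast
  have fL: "(\<lambda>k. frob_norm (Y' k - L)) \<longlonglongrightarrow> frob_norm (L - L)"
    by (rule frob_tendsto[OF conv[folded Y'_def] Y'c Lc Lc])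
  have "frob_norm (L - L) = 0"
  proof -
    have "L - L \<in> carrier_mat q q" by (rule minus_carrier_mat[OF Lc])
    thus ?thesis using frob_entries[of "L - L" q] Lc by simp
  qed
  with fL have fL0: "(\<lambda>k. frob_norm (Y' k - L)) \<longlonglongrightarrow> 0" by simp
  obtain N1 where N1: "\<And>k. k \<ge> N1 \<Longrightarrow> norm (g (Y' k) - 0) < \<epsilon>" using LIMSEQ_D[OF gY'0 ep] by blast
  obtain N2 where N2: "\<And>k. k \<ge> N2 \<Longrightarrow> norm (frob_norm (Y' k - L) - 0) < \<delta>" using LIMSEQ_D[OF fL0 de] by blast
  define k where "k = max (max N1 N2) (nat \<lceil>\<alpha>\<rceil>)"
  have "N1 \<le> k" unfolding k_def by simp
  from N1[OF this] have k1: "\<bar>g (Y' k) - 0\<bar> < \<epsilon>" by simp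
  have "N2 \<le> k" unfolding k_def by simp
  from N2[OF this] have k2: "frob_norm (Y' k - L) < \<delta>" by simp
  have "k \<le> r k" using r by (rule seq_suble)
  hence k3: "\<alpha> \<le> real (r k) + 1" unfolding k_def by linarith
  have "Y' k \<in> {Y \<in> ?O. nuclear_norm Y - spectral_norm Y = g (Y' k)}" using Y'O unfolding g_def by simp
  with cl[OF k1] k2 obtain Z where Z: "Z \<in> ?O" "nuclear_norm Z - spectral_norm Z = 0"
    and Zb: "frob_norm (Y' k - Z) \<le> \<alpha> * \<bar>g (Y' k) - 0\<bar>" by blast
  have gZ: "g Z = 0" using Z(2) unfolding g_def .
  have "\<alpha> * \<bar>g (Y' k) - 0\<bar> = \<alpha> * g (Y' k)" using gnn Y'O by simp
  also have "\<dots> \<le> (real (r k) + 1) * g (Y' k)" using k3 gnn Y'O by (intro mult_right_mono) auto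
  also have "\<dots> < frob_norm (Y' k - Z)" using Yb[OF Z(1) gZ, of "r k"] unfolding Y'_def by simp
  finally show False using Zb by simp
qed

theorem proposition2:
  fixes q m :: nat and Cbar :: "real mat" and A :: "real mat \<Rightarrow> real vec" and b :: "real vec"
  assumes Cbar: "Cbar \<in> symm_mats q"
    and A: "linear_map_Sq q m A"
    and b: "b \<in> carrier_vec m"
    and nonempty: "Omega_set q A b \<noteq> {}"
    and bounded: "\<exists>B. \<forall>Y \<in> Omega_set q A b. frob_norm Y \<le> B"
    and inter: "Omega_set q A b \<inter> rank_le1_set q \<noteq> {}"
    and calm: "\<forall>Y \<in> {Y \<in> Omega_set q A b. nuclear_norm Y - spectral_norm Y = 0}.
                 calm_at (\<lambda>w. {Y \<in> Omega_set q A b. nuclear_norm Y - spectral_norm Y = w}) 0 Y"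
  shows "\<exists>\<rho>b>0. \<forall>\<rho>>\<rho>b. \<forall>Ystar.
           is_min_on (\<lambda>Y. trace_inner Cbar Y) (Omega_set q A b \<inter> rank_le1_set q) Ystar
           \<longleftrightarrow> is_min_on (\<lambda>Y. trace_inner Cbar Y + \<rho> * (nuclear_norm Y - spectral_norm Y))
                 (Omega_set q A b) Ystar"
proof -
  let ?O = "Omega_set q A b"
  define g where "g = (\<lambda>Y. nuclear_norm Y - spectral_norm Y)"
  define f where "f = (\<lambda>Y. trace_inner Cbar Y)"
  obtain \<kappa> where kp: "\<kappa> > 0"
    and eb: "\<forall>Y\<in>?O. \<exists>Z\<in>?O. g Z = 0 \<and> frob_norm (Y - Z) \<le> \<kappa> * g Y"
    using error_bound[OF A bounded inter calm] unfolding g_def by blast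
  have Cc: "Cbar \<in> carrier_mat q q" using Cbar unfolding symm_mats_def by auto
  define Lc where "Lc = (\<Sum>i<q. \<Sum>r<q. \<bar>Cbar $$ (r,i)\<bar>)"
  have Lc0: "0 \<le> Lc" unfolding Lc_def by (intro sum_nonneg) auto
  have lip: "f Z \<le> f Y + Lc * frob_norm (Y - Z)" if "Y \<in> ?O" "Z \<in> ?O" for Y Z
    unfolding f_def Lc_def by (rule lipschitz[OF Cc omega_carrier[OF that(1)] omega_carrier[OF that(2)]])
  have gnn: "0 \<le> g Y" if "Y \<in> ?O" for Y
    using psd_facts(4)[OF omega_psd[OF that]] unfolding g_def by simp
  have Riff: "Y \<in> rank_le1_set q \<longleftrightarrow> g Y = 0" if "Y \<in> ?O" for Y
    using omega_rank_iff[OF that] unfolding g_def by simp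
  have key: "f Z \<le> f Y + Lc * \<kappa> * g Y" if "Y \<in> ?O" "Z \<in> ?O" "frob_norm (Y - Z) \<le> \<kappa> * g Y" for Y Z
  proof -
    have "f Z \<le> f Y + Lc * frob_norm (Y - Z)" by (rule lip[OF that(1,2)])
    also have "\<dots> \<le> f Y + Lc * (\<kappa> * g Y)" using that(3) Lc0 by (intro add_left_mono mult_left_mono) auto
    finally show ?thesis by (simp add: mult.assoc)
  qed
  define \<rho>b where "\<rho>b = Lc * \<kappa> + 1"
  have "\<rho>b > 0" unfolding \<rho>b_def using Lc0 kp by (simp add: add_nonneg_pos)
  moreover have "\<forall>\<rho>>\<rho>b. \<forall>Ystar.
           is_min_on (\<lambda>Y. trace_inner Cbar Y) (?O \<inter> rank_le1_set q) Ystar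
           \<longleftrightarrow> is_min_on (\<lambda>Y. trace_inner Cbar Y + \<rho> * (nuclear_norm Y - spectral_norm Y)) ?O Ystar"
  proof (intro allI impI)
    fix \<rho> :: real and Ystar assume rho: "\<rho> > \<rho>b"
    hence rho': "Lc * \<kappa> < \<rho>" unfolding \<rho>b_def by simp
    have "is_min_on f (?O \<inter> rank_le1_set q) Ystar \<longleftrightarrow> is_min_on (\<lambda>Y. f Y + \<rho> * g Y) ?O Ystar"
    proof
      assume m: "is_min_on f (?O \<inter> rank_le1_set q) Ystar"
      hence YsO: "Ystar \<in> ?O" and YsR: "Ystar \<in> rank_le1_set q"
        and mn: "\<forall>Z\<in>?O \<inter> rank_le1_set q. f Ystar \<le> f Z" unfolding is_min_on_def by auto
      have gYs: "g Ystar = 0" using Riff[OF YsO] YsR by simp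
      show "is_min_on (\<lambda>Y. f Y + \<rho> * g Y) ?O Ystar"
        unfolding is_min_on_def
      proof (intro conjI ballI)
        show "Ystar \<in> ?O" by (rule YsO)
      next
        fix Y assume Y: "Y \<in> ?O"
        obtain Z where Z: "Z \<in> ?O" "g Z = 0" "frob_norm (Y - Z) \<le> \<kappa> * g Y" using eb Y by blast
        have "Z \<in> rank_le1_set q" using Riff[OF Z(1)] Z(2) by simp
        hence "f Ystar \<le> f Z" using mn Z(1) by blast
        also have "\<dots> \<le> f Y + Lc * \<kappa> * g Y" by (rule key[OF Y Z(1) Z(3)])
        also have "\<dots> \<le> f Y + \<rho> * g Y" using rho' gnn[OF Y] by (intro add_left_mono mult_right_mono) auto
        finally show "f Ystar + \<rho> * g Ystar \<le> f Y + \<rho> * g Y" using gYs by simp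
      qed
    next
      assume m: "is_min_on (\<lambda>Y. f Y + \<rho> * g Y) ?O Ystar"
      hence YsO: "Ystar \<in> ?O" and mn: "\<forall>Z\<in>?O. f Ystar + \<rho> * g Ystar \<le> f Z + \<rho> * g Z"
        unfolding is_min_on_def by auto
      obtain Z where Z: "Z \<in> ?O" "g Z = 0" "frob_norm (Ystar - Z) \<le> \<kappa> * g Ystar" using eb YsO by blast
      have "f Ystar + \<rho> * g Ystar \<le> f Z" using mn Z(1) Z(2) by force
      also have "\<dots> \<le> f Ystar + Lc * \<kappa> * g Ystar" by (rule key[OF YsO Z(1) Z(3)])
      finally have "(\<rho> - Lc * \<kappa>) * g Ystar \<le> 0" by (simp add: algebra_simps)
      moreover have "0 < \<rho> - Lc * \<kappa>" using rho' by simp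
      ultimately have "g Ystar \<le> 0" by (simp add: mult_le_0_iff)
      hence gYs: "g Ystar = 0" using gnn[OF YsO] by simp
      show "is_min_on f (?O \<inter> rank_le1_set q) Ystar"
        unfolding is_min_on_def
      proof (intro conjI ballI)
        show "Ystar \<in> ?O \<inter> rank_le1_set q" using YsO Riff[OF YsO] gYs by simp
      next
        fix Z' assume Z': "Z' \<in> ?O \<inter> rank_le1_set q"
        hence "g Z' = 0" using Riff by blast
        thus "f Ystar \<le> f Z'" using mn Z' gYs by force
      qed
    qed
    thus "is_min_on (\<lambda>Y. trace_inner Cbar Y) (?O \<inter> rank_le1_set q) Ystar
           \<longleftrightarrow> is_min_on (\<lambda>Y. trace_inner Cbar Y + \<rho> * (nuclear_norm Y - spectral_norm Y)) ?O Ystar"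
      unfolding f_def g_def by simp
  qed
  ultimately show ?thesis by blast
qed

end
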